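(* In the setting described in the context, the exterior differentials of $\rho_0,\kappa_0',\zeta_0'$ are: $$d\rho_0=\Big(\tfrac13\tfrac{\mathcal L_1(\mathcal L_1(\bar k))}{\mathcal L_1(\bar k)}+\tfrac23P\Big)\rho_0\wedge\kappa_0'-\tfrac{\mathcal L_1(k)}{\overline{\mathcal L}_1(k)}\,\rho_0\wedge\zeta_0'+\Big(\tfrac13\tfrac{\overline{\mathcal L}_1(\overline{\mathcal L}_1(k))}{\overline{\mathcal L}_1(k)}+\tfrac23\overline P\Big)\rho_0\wedge\bar\kappa_0'-\tfrac{\overline{\mathcal L}_1(\bar k)}{\mathcal L_1(\bar k)}\,\rho_0\wedge\bar\zeta_0'+i\,\kappa_0'\wedge\bar\kappa_0',$$ $$\begin{aligned}d\kappa_0'={}&\Big(-\tfrac i3\tfrac{\mathcal L_1(\overline{\mathcal L}_1(\overline{\mathcal L}_1(k)))}{\overline{\mathcal L}_1(k)}+\tfrac i9\tfrac{\mathcal L_1(\mathcal L_1(\bar k))\,\overline{\mathcal L}_1(\overline{\mathcal L}_1(k))}{\mathcal L_1(\bar k)\,\overline{\mathcal L}_1(k)}+\tfrac i3\tfrac{\mathcal L_1(\overline{\mathcal L}_1(k))\,\overline{\mathcal L}_1(\overline{\mathcal L}_1(k))}{\overline{\mathcal L}_1(k)^2}-\tfrac i9\tfrac{\mathcal L_1(\mathcal L_1(\bar k))}{\mathcal L_1(\bar k)}\overline P+\tfrac{2i}9\tfrac{\overline{\mathcal L}_1(\overline{\mathcal L}_1(k))}{\overline{\mathcal L}_1(k)}P+\tfrac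 i3\mathcal L_1(\overline P)-\tfrac{2i}9P\overline P\Big)\rho_0\wedge\kappa_0'\\&+\Big(-\tfrac i3\tfrac{\mathcal K(\overline{\mathcal L}_1(\overline{\mathcal L}_1(k)))}{\overline{\mathcal L}_1(k)^2}+\tfrac i3\tfrac{\mathcal K(\overline{\mathcal L}_1(k))\,\overline{\mathcal L}_1(\overline{\mathcal L}_1(k))}{\overline{\mathcal L}_1(k)^3}-\tfrac i3\tfrac{\mathcal L_1(\mathcal L_1(\bar k))}{\mathcal L_1(\bar k)}-\tfrac i3\tfrac{\overline{\mathcal L}_1(\mathcal L_1(k))}{\overline{\mathcal L}_1(k)}-\tfrac23\tfrac{\mathcal T(k)}{\overline{\mathcal L}_1(k)}\Big)\rho_0\wedge\zeta_0'\\&+\Big(-\tfrac i3\tfrac{\overline{\mathcal L}_1(\overline{\mathcal L}_1(\overline{\mathcal L}_1(k)))}{\overline{\mathcal L}_1(k)}+\tfrac{4i}9\tfrac{\overline{\mathcal L}_1(\overline{\mathcal L}_1(k))^2}{\overline{\mathcal L}_1(k)^2}+\tfrac i9\tfrac{\overline{\mathcal L}_1(\overline{\mathcal L}_1(k))}{\overline{\mathcal L}_1(k)}\overline P+\tfrac i3\overline{\mathcal L}_1(\overline P)-\tfrac{2i}9\overline P\,\overline P\Big)\rho_0\wedge\bar\kappa_0'+0\cdot\rho_0\wedge\bar\zeta_0'\\&-\tfrac{\mathcal L_1(k)}{\overline{\mathcal L}_1(k)}\,\kappa_0'\wedge\zeta_0'+\Big(-\tfrac13\tfrac{\overline{\mathcal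 L}_1(\overline{\mathcal L}_1(k))}{\overline{\mathcal L}_1(k)}+\tfrac13\overline P\Big)\kappa_0'\wedge\bar\kappa_0'+\zeta_0'\wedge\bar\kappa_0',\end{aligned}$$ $$\begin{aligned}d\zeta_0'={}&\Big(\tfrac i3\tfrac{\mathcal L_1(\mathcal L_1(\bar k))\,\overline{\mathcal L}_1(\overline{\mathcal L}_1(k))}{\mathcal L_1(\bar k)\,\overline{\mathcal L}_1(k)}-\tfrac i3\tfrac{\mathcal L_1(\overline{\mathcal L}_1(k))\,\overline{\mathcal L}_1(\overline{\mathcal L}_1(k))}{\overline{\mathcal L}_1(k)^2}-\tfrac i3\tfrac{\overline{\mathcal L}_1(\overline{\mathcal L}_1(k))}{\overline{\mathcal L}_1(k)}P+\tfrac i3\tfrac{\mathcal L_1(\overline{\mathcal L}_1(k))}{\overline{\mathcal L}_1(k)}\overline P+\tfrac{\mathcal T(\overline{\mathcal L}_1(k))}{\overline{\mathcal L}_1(k)}\Big)\rho_0\wedge\zeta_0'\\&+\tfrac{\mathcal L_1(\overline{\mathcal L}_1(k))}{\overline{\mathcal L}_1(k)}\,\kappa_0'\wedge\zeta_0'-\tfrac{\overline{\mathcal L}_1(\overline{\mathcal L}_1(k))}{\overline{\mathcal L}_1(k)}\,\zeta_0'\wedge\bar\kappa_0'+\tfrac{\overline{\mathcal L}_1(\bar k)}{\mathcal L_1(\bar k)}\,\zeta_0'\wedge\bar\zeta_0'.\end{aligned}$$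
   Context: Let $M\subset\mathbb C^3$ be a real-analytic real hypersurface, considered locally near a point, represented in holomorphic coordinates $(z_1,z_2,w)$, $w=u+iv$, as a graph $u=F(z_1,z_2,\bar z_1,\bar z_2,v)$; $(z_1,z_2,\bar z_1,\bar z_2,v)$ are coordinates on $M$. Bars denote complex conjugation. Put $A^j:=-iF_{z_j}/(1+iF_v)$ ($j=1,2$), $\mathcal L_j:=\partial_{z_j}+A^j\partial_v$, with conjugates $\overline{\mathcal L}_j$. Let $\ell:=i(\mathcal L_1(\overline{A^1})-\overline{\mathcal L}_1(A^1))$, assumed nowhere zero, and let $\mathcal T:=\ell\,\partial_v$ (so $\mathcal T=i[\mathcal L_1,\overline{\mathcal L}_1]$). Assume the Levi form of $M$ has constant rank $1$ and let $k:=-(\mathcal L_2(\overline{A^1})-\overline{\mathcal L}_1(A^2))/(\mathcal L_1(\overline{A^1})-\overline{\mathcal L}_1(A^1))$ and $\mathcal K:=k\mathcal L_1+\mathcal L_2$ (spanning the Levi kernel). Assume 2-nondegeneracy: $\overline{\mathcal L}_1(k)$ (hence also $\mathcal L_1(\bar k)$) vanishes nowhere. Let $P:=(\ell_{z_1}+A^1\ell_v-\ell A^1_v)/\ell$. Define on $M$ the 1-forms $\rho_0:=\ell^{-1}(dv-A^1dz_1-A^2dz_2-\overline{A^1}d\bar z_1-\overline{A^2}d\bar z_2)$ (real), $B_0:=\overline{\mathcal L}_1(\overline{\mathcal L}_1(k))/\overline{\mathcal L}_1(k)-\overline P$, $\kappa_0':=dz_1-k\,dz_2+\tfrac i3B_0\,\rho_0$,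 $\zeta_0':=\overline{\mathcal L}_1(k)\,dz_2$, together with the conjugates $\bar\kappa_0',\bar\zeta_0'$; $\{\rho_0,\kappa_0',\zeta_0',\bar\kappa_0',\bar\zeta_0'\}$ is a coframe of $\mathbb C\otimes TM$. *)

theory Defs
  imports "HOL-Analysis.Analysis"
begin

text \<open>Coordinates on M: points (z1, z2, v) in C x C x R (real dimension 5).
  Functions on M are maps pt => complex; the defining function F is real-valued.\<close>

type_synonym pt = "complex \<times> complex \<times> real"

definition dirD :: "('a::real_normed_vector \<Rightarrow> 'b::real_normed_vector) \<Rightarrow> 'a \<Rightarrow> 'a \<Rightarrow> 'b" where
  "dirD f h x = frechet_derivative f (at x) h"

coinductive smooth_on :: "'a::real_normed_vector set \<Rightarrow> ('a \<Rightarrow> 'b::real_normed_vector) \<Rightarrow> bool"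
  for U where
  "f differentiable_on U \<Longrightarrow> (\<forall>h. smooth_on U (\<lambda>x. dirD f h x)) \<Longrightarrow> smooth_on U f"

text \<open>Real-analytic on an open set U: smooth and, near every point, equal to the sum of
  its Taylor series (grouped by homogeneous degree).\<close>
definition real_analytic_on :: "'a::real_normed_vector set \<Rightarrow> ('a \<Rightarrow> 'b::real_normed_field) \<Rightarrow> bool" where
  "real_analytic_on U f \<longleftrightarrow> smooth_on U f \<and>
     (\<forall>p\<in>U. \<exists>r>0. ball p r \<subseteq> U \<and>
        (\<forall>q\<in>ball p r. (\<lambda>n. ((\<lambda>g x. dirD g (q - p) x) ^^ n) f p / fact n) sums f q))"

text \<open>Real partial derivatives in the coordinates x1,y1,x2,y2,v (z_j = x_j + i y_j).\<close>
definition dx1 :: "(pt \<Rightarrow> complex) \<Rightarrow> pt \<Rightarrow> complex" where "dx1 f = dirD f (1, 0, 0)"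
definition dy1 :: "(pt \<Rightarrow> complex) \<Rightarrow> pt \<Rightarrow> complex" where "dy1 f = dirD f (\<i>, 0, 0)"
definition dx2 :: "(pt \<Rightarrow> complex) \<Rightarrow> pt \<Rightarrow> complex" where "dx2 f = dirD f (0, 1, 0)"
definition dy2 :: "(pt \<Rightarrow> complex) \<Rightarrow> pt \<Rightarrow> complex" where "dy2 f = dirD f (0, \<i>, 0)"
definition dv :: "(pt \<Rightarrow> complex) \<Rightarrow> pt \<Rightarrow> complex" where "dv f = dirD f (0, 0, 1)"

definition dz1 :: "(pt \<Rightarrow> complex) \<Rightarrow> pt \<Rightarrow> complex" where "dz1 f x = (dx1 f x - \<i> * dy1 f x) / 2"
definition dzb1 :: "(pt \<Rightarrow> complex) \<Rightarrow> pt \<Rightarrow> complex" where "dzb1 f x = (dx1 f x + \<i> * dy1 f x) / 2"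
definition dz2 :: "(pt \<Rightarrow> complex) \<Rightarrow> pt \<Rightarrow> complex" where "dz2 f x = (dx2 f x - \<i> * dy2 f x) / 2"
definition dzb2 :: "(pt \<Rightarrow> complex) \<Rightarrow> pt \<Rightarrow> complex" where "dzb2 f x = (dx2 f x + \<i> * dy2 f x) / 2"

definition Fc :: "(pt \<Rightarrow> real) \<Rightarrow> pt \<Rightarrow> complex" where "Fc F x = complex_of_real (F x)"

definition A1 :: "(pt \<Rightarrow> real) \<Rightarrow> pt \<Rightarrow> complex" where
  "A1 F x = - \<i> * dz1 (Fc F) x / (1 + \<i> * dv (Fc F) x)"
definition A2 :: "(pt \<Rightarrow> real) \<Rightarrow> pt \<Rightarrow> complex" where
  "A2 F x = - \<i> * dz2 (Fc F) x / (1 + \<i> * dv (Fc F) x)"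

definition L1op :: "(pt \<Rightarrow> real) \<Rightarrow> (pt \<Rightarrow> complex) \<Rightarrow> pt \<Rightarrow> complex" where
  "L1op F g x = dz1 g x + A1 F x * dv g x"
definition L2op :: "(pt \<Rightarrow> real) \<Rightarrow> (pt \<Rightarrow> complex) \<Rightarrow> pt \<Rightarrow> complex" where
  "L2op F g x = dz2 g x + A2 F x * dv g x"
definition Lb1op :: "(pt \<Rightarrow> real) \<Rightarrow> (pt \<Rightarrow> complex) \<Rightarrow> pt \<Rightarrow> complex" where
  "Lb1op F g x = dzb1 g x + cnj (A1 F x) * dv g x"
definition Lb2op :: "(pt \<Rightarrow> real) \<Rightarrow> (pt \<Rightarrow> complex) \<Rightarrow> pt \<Rightarrow> complex" where
  "Lb2op F g x = dzb2 g x + cnj (A2 F x) * dv g x"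

definition ell :: "(pt \<Rightarrow> real) \<Rightarrow> pt \<Rightarrow> complex" where
  "ell F x = \<i> * (L1op F (\<lambda>q. cnj (A1 F q)) x - Lb1op F (A1 F) x)"

definition Top :: "(pt \<Rightarrow> real) \<Rightarrow> (pt \<Rightarrow> complex) \<Rightarrow> pt \<Rightarrow> complex" where
  "Top F g x = ell F x * dv g x"

text \<open>Levi form matrix: coefficient of d/dv in i [L_j, Lbar_l].\<close>
definition Lop :: "(pt \<Rightarrow> real) \<Rightarrow> 2 \<Rightarrow> (pt \<Rightarrow> complex) \<Rightarrow> pt \<Rightarrow> complex" where
  "Lop F j = (if j = 1 then L1op F else L2op F)"
definition Lbop :: "(pt \<Rightarrow> real) \<Rightarrow> 2 \<Rightarrow> (pt \<Rightarrow> complex) \<Rightarrow> pt \<Rightarrow> complex" where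
  "Lbop F j = (if j = 1 then Lb1op F else Lb2op F)"
definition Aj :: "(pt \<Rightarrow> real) \<Rightarrow> 2 \<Rightarrow> pt \<Rightarrow> complex" where
  "Aj F j = (if j = 1 then A1 F else A2 F)"
definition levi :: "(pt \<Rightarrow> real) \<Rightarrow> pt \<Rightarrow> complex^2^2" where
  "levi F x = (\<chi> j l. \<i> * (Lop F j (\<lambda>q. cnj (Aj F l q)) x - Lbop F l (Aj F j) x))"

definition kk :: "(pt \<Rightarrow> real) \<Rightarrow> pt \<Rightarrow> complex" where
  "kk F x = - (L2op F (\<lambda>q. cnj (A1 F q)) x - Lb1op F (A2 F) x)
              / (L1op F (\<lambda>q. cnj (A1 F q)) x - Lb1op F (A1 F) x)"

definition Kop :: "(pt \<Rightarrow> real) \<Rightarrow> (pt \<Rightarrow> complex) \<Rightarrow> pt \<Rightarrow> complex" where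
  "Kop F g x = kk F x * L1op F g x + L2op F g x"

definition PP :: "(pt \<Rightarrow> real) \<Rightarrow> pt \<Rightarrow> complex" where
  "PP F x = (dz1 (ell F) x + A1 F x * dv (ell F) x - ell F x * dv (A1 F) x) / ell F x"

text \<open>1-forms: a (complexified) 1-form is a map point => (real tangent vector => complex),
  real-linear in the vector.  Basic coordinate forms:\<close>
definition fz1 :: "pt \<Rightarrow> complex" where "fz1 h = fst h"
definition fz2 :: "pt \<Rightarrow> complex" where "fz2 h = fst (snd h)"
definition fv :: "pt \<Rightarrow> complex" where "fv h = complex_of_real (snd (snd h))"

definition rho0 :: "(pt \<Rightarrow> real) \<Rightarrow> pt \<Rightarrow> pt \<Rightarrow> complex" where
  "rho0 F x h = (fv h - A1 F x * fz1 h - A2 F x * fz2 h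
                 - cnj (A1 F x) * cnj (fz1 h) - cnj (A2 F x) * cnj (fz2 h)) / ell F x"

definition B0 :: "(pt \<Rightarrow> real) \<Rightarrow> pt \<Rightarrow> complex" where
  "B0 F x = Lb1op F (Lb1op F (kk F)) x / Lb1op F (kk F) x - cnj (PP F x)"

definition kappa0 :: "(pt \<Rightarrow> real) \<Rightarrow> pt \<Rightarrow> pt \<Rightarrow> complex" where
  "kappa0 F x h = fz1 h - kk F x * fz2 h + \<i> / 3 * B0 F x * rho0 F x h"

definition zeta0 :: "(pt \<Rightarrow> real) \<Rightarrow> pt \<Rightarrow> pt \<Rightarrow> complex" where
  "zeta0 F x h = Lb1op F (kk F) x * fz2 h"

definition conjform :: "(pt \<Rightarrow> pt \<Rightarrow> complex) \<Rightarrow> pt \<Rightarrow> pt \<Rightarrow> complex" where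
  "conjform \<omega> x h = cnj (\<omega> x h)"

text \<open>Exterior derivative of a 1-form, evaluated on (constant) tangent vectors X, Y:
  d omega (X,Y) = X(omega(Y)) - Y(omega(X)); wedge (a ^ b)(X,Y) = a(X)b(Y) - a(Y)b(X).\<close>
definition extd :: "(pt \<Rightarrow> pt \<Rightarrow> complex) \<Rightarrow> pt \<Rightarrow> pt \<Rightarrow> pt \<Rightarrow> complex" where
  "extd \<omega> x X Y = dirD (\<lambda>q. \<omega> q Y) X x - dirD (\<lambda>q. \<omega> q X) Y x"

definition wedge :: "(pt \<Rightarrow> pt \<Rightarrow> complex) \<Rightarrow> (pt \<Rightarrow> pt \<Rightarrow> complex) \<Rightarrow> pt \<Rightarrow> pt \<Rightarrow> pt \<Rightarrow> complex" where
  "wedge \<alpha> \<beta> x X Y = \<alpha> x X * \<beta> x Y - \<alpha> x Y * \<beta> x X"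

end

theory Submission
  imports Defs
begin

lemma dirD_works: "f differentiable (at x) \<Longrightarrow> (f has_derivative (\<lambda>h. dirD f h x)) (at x)"
  unfolding dirD_def using frechet_derivative_works by (metis eta_contract_eq)

lemma dirD_eq: "(f has_derivative f') (at x) \<Longrightarrow> dirD f h x = f' h"
  unfolding dirD_def using frechet_derivative_at by metis

lemma dirD_lin:
  assumes "f differentiable (at x)"
  shows "dirD f (a + b) x = dirD f a x + dirD f b x" "dirD f (r *\<^sub>R a) x = r *\<^sub>R dirD f a x"
proof -
  have l: "linear (\<lambda>h. dirD f h x)" using dirD_works[OF assms] has_derivative_linear by blast
  show "dirD f (a + b) x = dirD f a x + dirD f b x" using linear_add[OF l] by simp
  show "dirD f (r *\<^sub>R a) x = r *\<^sub>R dirD f a x" using linear_scale[OF l] by simp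
qed

lemma dirD_const[simp]: "dirD (\<lambda>y. c) h x = 0"
  by (rule dirD_eq[of _ "\<lambda>_. 0", simplified]) (rule has_derivative_const)

lemma dirD_add:
  "f differentiable (at x) \<Longrightarrow> g differentiable (at x) \<Longrightarrow>
   dirD (\<lambda>y. f y + g y) h x = dirD f h x + dirD g h x"
  by (rule dirD_eq[of _ "\<lambda>h. dirD f h x + dirD g h x", simplified])
     (intro has_derivative_add dirD_works)

lemma dirD_diff:
  "f differentiable (at x) \<Longrightarrow> g differentiable (at x) \<Longrightarrow>
   dirD (\<lambda>y. f y - g y) h x = dirD f h x - dirD g h x"
  by (rule dirD_eq[of _ "\<lambda>h. dirD f h x - dirD g h x", simplified])
     (intro has_derivative_diff dirD_works)

lemma dirD_mult:
  fixes f g :: "pt \<Rightarrow> complex"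
  shows "f differentiable (at x) \<Longrightarrow> g differentiable (at x) \<Longrightarrow>
   dirD (\<lambda>y. f y * g y) h x = f x * dirD g h x + dirD f h x * g x"
  by (rule dirD_eq[of _ "\<lambda>h. f x * dirD g h x + dirD f h x * g x", simplified])
     (intro has_derivative_mult dirD_works)

lemma dirD_inverse:
  fixes f :: "pt \<Rightarrow> complex"
  shows "f differentiable (at x) \<Longrightarrow> f x \<noteq> 0 \<Longrightarrow>
   dirD (\<lambda>y. inverse (f y)) h x = - (inverse (f x) * dirD f h x * inverse (f x))"
  by (rule dirD_eq[of _ "\<lambda>h. - (inverse (f x) * dirD f h x * inverse (f x))", simplified])
     (rule Deriv.has_derivative_inverse[OF _ dirD_works])

lemma dirD_cnj:
  fixes f :: "pt \<Rightarrow> complex"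
  shows "f differentiable (at x) \<Longrightarrow> dirD (\<lambda>y. cnj (f y)) h x = cnj (dirD f h x)"
  by (rule dirD_eq[of _ "\<lambda>h. cnj (dirD f h x)", simplified])
     (intro has_derivative_cnj dirD_works)

lemma dirD_ofreal:
  fixes G :: "pt \<Rightarrow> real"
  shows "G differentiable (at x) \<Longrightarrow> dirD (\<lambda>y. complex_of_real (G y)) h x = complex_of_real (dirD G h x)"
  by (rule dirD_eq[of _ "\<lambda>h. complex_of_real (dirD G h x)", simplified])
     (intro has_derivative_of_real dirD_works)

lemma diff_ofreal:
  fixes G :: "pt \<Rightarrow> real"
  shows "G differentiable (at x) \<Longrightarrow> (\<lambda>y. complex_of_real (G y)) differentiable (at x)"
  using has_derivative_of_real[OF dirD_works] unfolding differentiable_def by blast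

lemma dirD_linear:
  "bounded_linear l \<Longrightarrow> dirD l h x = l h"
  by (rule dirD_eq) (rule bounded_linear_imp_has_derivative)

lemma dirD_transfer:
  assumes "f differentiable (at x)" "open U" "x \<in> U" "\<And>y. y \<in> U \<Longrightarrow> f y = g y"
  shows "dirD f h x = dirD g h x"
  unfolding dirD_def using frechet_derivative_transform_within_open[OF assms] by simp

lemma diff_transfer:
  assumes "f differentiable (at x)" "open U" "x \<in> U" "\<And>y. y \<in> U \<Longrightarrow> f y = g y"
  shows "g differentiable (at x)"
  using assms has_derivative_transform_within_open unfolding differentiable_def by blast

inductive SS :: "pt set \<Rightarrow> (pt \<Rightarrow> complex) \<Rightarrow> bool" for U where
  base: "smooth_on U f \<Longrightarrow> SS U f"
| real: "smooth_on U (G::pt\<Rightarrow>real) \<Longrightarrow> SS U (\<lambda>x. complex_of_real (G x))"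
| const: "SS U (\<lambda>x. c)"
| lin: "bounded_linear l \<Longrightarrow> SS U l"
| add: "SS U f \<Longrightarrow> SS U g \<Longrightarrow> SS U (\<lambda>x. f x + g x)"
| mult: "SS U f \<Longrightarrow> SS U g \<Longrightarrow> SS U (\<lambda>x. f x * g x)"
| inv: "SS U f \<Longrightarrow> (\<forall>x\<in>U. f x \<noteq> 0) \<Longrightarrow> SS U (\<lambda>x. inverse (f x))"
| cnj: "SS U f \<Longrightarrow> SS U (\<lambda>x. cnj (f x))"
| eq: "SS U f \<Longrightarrow> (\<forall>x\<in>U. f x = g x) \<Longrightarrow> SS U g"

lemma smooth_diff_at: "smooth_on U f \<Longrightarrow> open U \<Longrightarrow> x \<in> U \<Longrightarrow> f differentiable (at x)"
  by (erule smooth_on.cases) (auto simp: differentiable_on_eq_differentiable_at)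

lemma smooth_dirD: "smooth_on U f \<Longrightarrow> smooth_on U (dirD f h)"
  by (erule smooth_on.cases) auto

lemma SS_step:
  assumes "open U"
  shows "SS U f \<Longrightarrow> (\<forall>x\<in>U. f differentiable (at x)) \<and> (\<forall>h. SS U (dirD f h))"
proof (induction rule: SS.induct)
  case (base f)
  then show ?case using smooth_diff_at[OF _ assms] smooth_dirD SS.base by blast
next
  case (real G)
  have d: "\<forall>x\<in>U. G differentiable (at x)" using smooth_diff_at[OF real assms] by blast
  show ?case
  proof
    show "\<forall>x\<in>U. (\<lambda>x. complex_of_real (G x)) differentiable (at x)"
      using d diff_ofreal by blast
    show "\<forall>h. SS U (dirD (\<lambda>x. complex_of_real (G x)) h)"
    proof
      fix h
      have "SS U (\<lambda>x. complex_of_real (dirD G h x))" using SS.real smooth_dirD real by blast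
      then show "SS U (dirD (\<lambda>x. complex_of_real (G x)) h)"
        by (rule SS.eq) (use d dirD_ofreal in auto)
    qed
  qed
next
  case (const c)
  then show ?case by (auto intro: SS.const)
next
  case (lin l)
  then show ?case
    by (auto simp: dirD_linear intro: SS.const bounded_linear_imp_differentiable)
next
  case (add f g)
  show ?case
  proof (intro conjI allI ballI)
    fix x assume "x \<in> U" then show "(\<lambda>x. f x + g x) differentiable (at x)"
      using add by (intro differentiable_add) auto
  next
    fix h
    have "SS U (\<lambda>x. dirD f h x + dirD g h x)" using add SS.add by blast
    then show "SS U (dirD (\<lambda>x. f x + g x) h)"
      by (rule SS.eq) (use add in \<open>simp add: dirD_add\<close>)
  qed
next
  case (mult f g)
  show ?case
  proof (intro conjI allI ballI)
    fix x assume "x \<in> U" then show "(\<lambda>x. f x * g x) differentiable (at x)"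
      using mult by (intro differentiable_mult) auto
  next
    fix h
    have "SS U (\<lambda>x. f x * dirD g h x + dirD f h x * g x)" using mult SS.add SS.mult by blast
    then show "SS U (dirD (\<lambda>x. f x * g x) h)"
      by (rule SS.eq) (use mult in \<open>simp add: dirD_mult\<close>)
  qed
next
  case (inv f)
  have i: "SS U (\<lambda>x. inverse (f x))" using SS.inv inv by blast
  show ?case
  proof (intro conjI allI ballI)
    fix x assume "x \<in> U" then show "(\<lambda>x. inverse (f x)) differentiable (at x)"
      using inv by (intro differentiable_inverse) auto
  next
    fix h
    have "SS U (\<lambda>x. (- 1) * (inverse (f x) * dirD f h x * inverse (f x)))"
      by (intro SS.mult SS.const i) (cases h, use inv in blast)
    then show "SS U (dirD (\<lambda>x. inverse (f x)) h)"
      by (rule SS.eq) (use inv in \<open>simp add: dirD_inverse\<close>)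
  qed
next
  case (cnj f)
  show ?case
  proof (intro conjI allI ballI)
    fix x assume "x \<in> U" then show "(\<lambda>x. cnj (f x)) differentiable (at x)"
      using cnj has_derivative_cnj[OF dirD_works] unfolding differentiable_def by blast
  next
    fix h
    have "SS U (\<lambda>x. cnj (dirD f h x))" using cnj SS.cnj by blast
    then show "SS U (dirD (\<lambda>x. cnj (f x)) h)"
      by (rule SS.eq) (use cnj in \<open>simp add: dirD_cnj\<close>)
  qed
next
  case (eq f g)
  show ?case
  proof (intro conjI allI ballI)
    fix x assume "x \<in> U" then show "g differentiable (at x)"
      using eq diff_transfer[OF _ assms] by metis
  next
    fix h
    have "SS U (dirD f h)" using eq by (cases h) blast
    then show "SS U (dirD g h)"
      by (rule SS.eq) (use eq dirD_transfer[OF _ assms] in metis)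
  qed
qed

lemma SS_smooth: "open U \<Longrightarrow> SS U f \<Longrightarrow> smooth_on U f"
proof (coinduction arbitrary: f rule: smooth_on.coinduct)
  case (smooth_on f)
  then show ?case using SS_step[OF smooth_on(1) smooth_on(2)]
    by (auto simp: differentiable_on_eq_differentiable_at)
qed

lemma has_deriv_line:
  fixes f :: "pt \<Rightarrow> complex"
  assumes "f differentiable (at (a + s *\<^sub>R h))"
  shows "((\<lambda>s. f (a + s *\<^sub>R h)) has_derivative (\<lambda>d. d *\<^sub>R dirD f h (a + s *\<^sub>R h))) (at s)"
proof -
  have g: "((\<lambda>s. a + s *\<^sub>R h) has_derivative (\<lambda>d. 0 + d *\<^sub>R h)) (at s)"
    by (rule has_derivative_add[OF has_derivative_const bounded_linear_imp_has_derivative[OF bounded_linear_scaleR_left]])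
  have "((\<lambda>s. f (a + s *\<^sub>R h)) has_derivative (\<lambda>d. dirD f (0 + d *\<^sub>R h) (a + s *\<^sub>R h))) (at s)"
    using has_derivative_compose[OF g dirD_works[OF assms]] .
  then show ?thesis
    by (rule has_derivative_eq_rhs) (auto simp: dirD_lin[OF assms])
qed

lemma delta_est:
  fixes f :: "pt \<Rightarrow> complex"
  assumes t: "0 < t"
    and df: "\<And>s \<tau>. s \<in> {0..t} \<Longrightarrow> \<tau> \<in> {0..t} \<Longrightarrow> f differentiable (at (x + s *\<^sub>R h + \<tau> *\<^sub>R k))"
    and dfh: "\<And>s \<tau>. s \<in> {0..t} \<Longrightarrow> \<tau> \<in> {0..t} \<Longrightarrow> dirD f h differentiable (at (x + s *\<^sub>R h + \<tau> *\<^sub>R k))"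
    and bnd: "\<And>s \<tau>. s \<in> {0..t} \<Longrightarrow> \<tau> \<in> {0..t} \<Longrightarrow> norm (dirD (dirD f h) k (x + s *\<^sub>R h + \<tau> *\<^sub>R k) - c) \<le> e"
  shows "norm (f (x + t *\<^sub>R h + t *\<^sub>R k) - f (x + t *\<^sub>R h) - f (x + t *\<^sub>R k) + f x - (t*t) *\<^sub>R c) \<le> t*(t*e)"
proof -
  define D where "D s = dirD f h (x + s *\<^sub>R h + t *\<^sub>R k) - dirD f h (x + s *\<^sub>R h) - t *\<^sub>R c" for s
  define \<psi> where "\<psi> s = f (x + s *\<^sub>R h + t *\<^sub>R k) - f (x + s *\<^sub>R h) - (s*t) *\<^sub>R c" for s
  have dpsi: "(\<psi> has_derivative (\<lambda>d. d *\<^sub>R D s)) (at s)" if "s \<in> {0..t}" for s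
  proof -
    have e1: "x + s *\<^sub>R h + t *\<^sub>R k = (x + t *\<^sub>R k) + s *\<^sub>R h" by (simp add: algebra_simps)
    have h1: "((\<lambda>s. f ((x + t *\<^sub>R k) + s *\<^sub>R h)) has_derivative (\<lambda>d. d *\<^sub>R dirD f h ((x + t *\<^sub>R k) + s *\<^sub>R h))) (at s)"
    proof (rule has_deriv_line)
      have "f differentiable at (x + s *\<^sub>R h + t *\<^sub>R k)" using df[of s t] that t by auto
      then show "f differentiable at (x + t *\<^sub>R k + s *\<^sub>R h)" unfolding e1[symmetric] .
    qed
    have h2: "((\<lambda>s. f (x + s *\<^sub>R h)) has_derivative (\<lambda>d. d *\<^sub>R dirD f h (x + s *\<^sub>R h))) (at s)"
      by (rule has_deriv_line) (use df[of s 0] that t in simp)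
    have h3: "((\<lambda>s. (s*t) *\<^sub>R c) has_derivative (\<lambda>d. d *\<^sub>R (t *\<^sub>R c))) (at s)"
      using bounded_linear_imp_has_derivative[OF bounded_linear_scaleR_left[of "t *\<^sub>R c"]] by simp
    have "((\<lambda>s. f ((x + t *\<^sub>R k) + s *\<^sub>R h) - f (x + s *\<^sub>R h) - (s*t) *\<^sub>R c) has_derivative
       (\<lambda>d. d *\<^sub>R dirD f h ((x + t *\<^sub>R k) + s *\<^sub>R h) - d *\<^sub>R dirD f h (x + s *\<^sub>R h) - d *\<^sub>R (t *\<^sub>R c))) (at s)"
      by (intro has_derivative_diff h1 h2 h3)
    then show ?thesis unfolding \<psi>_def D_def
      by (simp add: algebra_simps)
  qed
  have cpsi: "continuous_on {0..t} \<psi>"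
    by (rule has_derivative_continuous_on) (use dpsi has_derivative_at_withinI in blast)
  obtain \<sigma> where \<sigma>: "\<sigma> \<in> {0<..<t}" and m1: "norm (\<psi> t - \<psi> 0) \<le> norm ((t - 0) *\<^sub>R D \<sigma>)"
  proof -
    have "\<exists>\<sigma>\<in>{0<..<t}. norm (\<psi> t - \<psi> 0) \<le> norm ((t - 0) *\<^sub>R D \<sigma>)"
      by (rule mvt_general[OF t cpsi, of "\<lambda>s d. d *\<^sub>R D s"]) (use dpsi in auto)
    then show ?thesis using that by blast
  qed
  define ch where "ch \<tau> = dirD f h (x + \<sigma> *\<^sub>R h + \<tau> *\<^sub>R k) - \<tau> *\<^sub>R c" for \<tau>
  have dchi: "(ch has_derivative (\<lambda>d. d *\<^sub>R (dirD (dirD f h) k (x + \<sigma> *\<^sub>R h + \<tau> *\<^sub>R k) - c))) (at \<tau>)"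
    if "\<tau> \<in> {0..t}" for \<tau>
  proof -
    have h1: "((\<lambda>\<tau>. dirD f h ((x + \<sigma> *\<^sub>R h) + \<tau> *\<^sub>R k)) has_derivative
      (\<lambda>d. d *\<^sub>R dirD (dirD f h) k ((x + \<sigma> *\<^sub>R h) + \<tau> *\<^sub>R k))) (at \<tau>)"
      by (rule has_deriv_line) (use dfh that \<sigma> in auto)
    have "((\<lambda>\<tau>. dirD f h ((x + \<sigma> *\<^sub>R h) + \<tau> *\<^sub>R k) - \<tau> *\<^sub>R c) has_derivative
      (\<lambda>d. d *\<^sub>R dirD (dirD f h) k ((x + \<sigma> *\<^sub>R h) + \<tau> *\<^sub>R k) - d *\<^sub>R c)) (at \<tau>)"
      by (intro has_derivative_diff h1 bounded_linear_imp_has_derivative bounded_linear_scaleR_left)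
    then show ?thesis unfolding ch_def by (simp add: algebra_simps)
  qed
  have cchi: "continuous_on {0..t} ch"
    by (rule has_derivative_continuous_on) (use dchi has_derivative_at_withinI in blast)
  obtain \<tau> where \<tau>: "\<tau> \<in> {0<..<t}" and m2: "norm (ch t - ch 0) \<le>
      norm ((t - 0) *\<^sub>R (dirD (dirD f h) k (x + \<sigma> *\<^sub>R h + \<tau> *\<^sub>R k) - c))"
  proof -
    have "\<exists>\<tau>\<in>{0<..<t}. norm (ch t - ch 0) \<le>
      norm ((t - 0) *\<^sub>R (dirD (dirD f h) k (x + \<sigma> *\<^sub>R h + \<tau> *\<^sub>R k) - c))"
      by (rule mvt_general[OF t cchi, of "\<lambda>\<tau> d. d *\<^sub>R (dirD (dirD f h) k (x + \<sigma> *\<^sub>R h + \<tau> *\<^sub>R k) - c)"]) (use dchi in auto)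
    then show ?thesis using that by blast
  qed
  have "norm (dirD (dirD f h) k (x + \<sigma> *\<^sub>R h + \<tau> *\<^sub>R k) - c) \<le> e"
    using bnd \<sigma> \<tau> by auto
  with m2 t have m2': "norm (ch t - ch 0) \<le> t * e"
    by (metis (no_types, opaque_lifting) abs_of_pos mult_left_mono norm_scaleR order_trans less_imp_le diff_zero)
  have "ch t - ch 0 = D \<sigma>" unfolding ch_def D_def by simp
  with m1 m2' t have "norm (\<psi> t - \<psi> 0) \<le> t * (t * e)"
    by (metis (no_types, opaque_lifting) abs_of_pos mult_left_mono norm_scaleR order_trans less_imp_le diff_zero)
  moreover have "\<psi> t - \<psi> 0 = f (x + t *\<^sub>R h + t *\<^sub>R k) - f (x + t *\<^sub>R h) - f (x + t *\<^sub>R k) + f x - (t*t) *\<^sub>R c"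
    unfolding \<psi>_def by (simp add: algebra_simps)
  ultimately show ?thesis by simp
qed

lemma schwarz:
  fixes f :: "pt \<Rightarrow> complex"
  assumes U: "open U" "x \<in> U"
    and d0: "\<forall>y\<in>U. f differentiable (at y)"
    and dh: "\<forall>y\<in>U. dirD f h differentiable (at y)"
    and dk: "\<forall>y\<in>U. dirD f k differentiable (at y)"
    and c1: "isCont (dirD (dirD f h) k) x" and c2: "isCont (dirD (dirD f k) h) x"
  shows "dirD (dirD f h) k x = dirD (dirD f k) h x"
proof (rule ccontr)
  define a where "a = dirD (dirD f h) k x"
  define b where "b = dirD (dirD f k) h x"
  assume "dirD (dirD f h) k x \<noteq> dirD (dirD f k) h x"
  then have dpos: "norm (a - b) > 0" unfolding a_def b_def by simp
  define e where "e = norm (a - b) / 4"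
  have epos: "e > 0" using dpos unfolding e_def by simp
  obtain d1 where d1: "d1 > 0" "\<And>y. dist y x < d1 \<Longrightarrow> dist (dirD (dirD f h) k y) a < e"
    using c1 epos unfolding continuous_at_eps_delta a_def by blast
  obtain d2 where d2: "d2 > 0" "\<And>y. dist y x < d2 \<Longrightarrow> dist (dirD (dirD f k) h y) b < e"
    using c2 epos unfolding continuous_at_eps_delta b_def by blast
  obtain r where r: "r > 0" "ball x r \<subseteq> U" using U open_contains_ball by blast
  define m where "m = min r (min d1 d2)"
  have mpos: "m > 0" using r d1 d2 unfolding m_def by simp
  define t where "t = m / (2 * (norm h + norm k + 1))"
  have tpos: "t > 0" unfolding t_def using mpos by (intro divide_pos_pos) (auto intro: add_nonneg_pos)
  have small: "norm (s *\<^sub>R h + \<tau> *\<^sub>R k) < m" if "s \<in> {0..t}" "\<tau> \<in> {0..t}" for s \<tau>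
  proof -
    define N where "N = norm h + norm k"
    have N0: "N \<ge> 0" unfolding N_def by simp
    have "norm (s *\<^sub>R h + \<tau> *\<^sub>R k) \<le> norm (s *\<^sub>R h) + norm (\<tau> *\<^sub>R k)"
      by (rule norm_triangle_ineq)
    also have "\<dots> = s * norm h + \<tau> * norm k" using that by simp
    also have "\<dots> \<le> t * norm h + t * norm k"
      using that by (intro add_mono mult_right_mono) auto
    also have "\<dots> = t * N" unfolding N_def by (simp add: distrib_left)
    also have "\<dots> = m * (N / (2 * (N + 1)))" unfolding t_def N_def by simp
    also have "\<dots> < m * 1"
    proof (rule mult_strict_left_mono[OF _ mpos])
      have "N < 2 * (N + 1)" using N0 by simp
      then show "N / (2 * (N + 1)) < 1" using N0 by (simp add: divide_less_eq)
    qed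
    finally show ?thesis by simp
  qed
  have inU: "x + s *\<^sub>R h + \<tau> *\<^sub>R k \<in> U" "x + \<tau> *\<^sub>R k + s *\<^sub>R h \<in> U"
    and dd1: "dist (x + s *\<^sub>R h + \<tau> *\<^sub>R k) x < d1"
    and dd2: "dist (x + \<tau> *\<^sub>R k + s *\<^sub>R h) x < d2"
    if "s \<in> {0..t}" "\<tau> \<in> {0..t}" for s \<tau>
  proof -
    have n: "norm (s *\<^sub>R h + \<tau> *\<^sub>R k) < m" using small that .
    have e1: "x + s *\<^sub>R h + \<tau> *\<^sub>R k = x + (s *\<^sub>R h + \<tau> *\<^sub>R k)" by (simp add: add.assoc)
    have e2: "x + \<tau> *\<^sub>R k + s *\<^sub>R h = x + (s *\<^sub>R h + \<tau> *\<^sub>R k)" by (simp add: add.assoc add.commute)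
    have dx: "dist (x + (s *\<^sub>R h + \<tau> *\<^sub>R k)) x = norm (s *\<^sub>R h + \<tau> *\<^sub>R k)"
      by (simp add: dist_norm)
    have dx': "dist x (x + (s *\<^sub>R h + \<tau> *\<^sub>R k)) = norm (s *\<^sub>R h + \<tau> *\<^sub>R k)"
      by (metis dist_commute dx)
    have m1: "m \<le> r" "m \<le> d1" "m \<le> d2" unfolding m_def by auto
    have "x + (s *\<^sub>R h + \<tau> *\<^sub>R k) \<in> ball x r" unfolding mem_ball dx' using n m1 by simp
    then have "x + (s *\<^sub>R h + \<tau> *\<^sub>R k) \<in> U" using r by blast
    then show "x + s *\<^sub>R h + \<tau> *\<^sub>R k \<in> U" "x + \<tau> *\<^sub>R k + s *\<^sub>R h \<in> U"
      unfolding e1 e2 by auto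
    show "dist (x + s *\<^sub>R h + \<tau> *\<^sub>R k) x < d1" unfolding e1 dx using n m1 by simp
    show "dist (x + \<tau> *\<^sub>R k + s *\<^sub>R h) x < d2" unfolding e2 dx using n m1 by simp
  qed
  have E1: "norm (f (x + t *\<^sub>R h + t *\<^sub>R k) - f (x + t *\<^sub>R h) - f (x + t *\<^sub>R k) + f x - (t*t) *\<^sub>R a) \<le> t*(t*e)"
  proof (rule delta_est[OF tpos])
    fix s \<tau> assume st: "s \<in> {0..t}" "\<tau> \<in> {0..t}"
    show "f differentiable at (x + s *\<^sub>R h + \<tau> *\<^sub>R k)" using d0 inU(1)[OF st] by blast
    show "dirD f h differentiable at (x + s *\<^sub>R h + \<tau> *\<^sub>R k)" using dh inU(1)[OF st] by blast
    show "norm (dirD (dirD f h) k (x + s *\<^sub>R h + \<tau> *\<^sub>R k) - a) \<le> e"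
      using d1(2)[OF dd1[OF st]] by (simp add: dist_norm)
  qed
  have E2: "norm (f (x + t *\<^sub>R k + t *\<^sub>R h) - f (x + t *\<^sub>R k) - f (x + t *\<^sub>R h) + f x - (t*t) *\<^sub>R b) \<le> t*(t*e)"
  proof (rule delta_est[OF tpos])
    fix s \<tau> assume st: "s \<in> {0..t}" "\<tau> \<in> {0..t}"
    show "f differentiable at (x + s *\<^sub>R k + \<tau> *\<^sub>R h)" using d0 inU(2)[OF st(2) st(1)] by blast
    show "dirD f k differentiable at (x + s *\<^sub>R k + \<tau> *\<^sub>R h)" using dk inU(2)[OF st(2) st(1)] by blast
    show "norm (dirD (dirD f k) h (x + s *\<^sub>R k + \<tau> *\<^sub>R h) - b) \<le> e"
      using d2(2)[OF dd2[OF st(2) st(1)]] by (simp add: dist_norm)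
  qed
  define \<Delta> where "\<Delta> = f (x + t *\<^sub>R h + t *\<^sub>R k) - f (x + t *\<^sub>R h) - f (x + t *\<^sub>R k) + f x"
  have eqv: "x + t *\<^sub>R k + t *\<^sub>R h = x + t *\<^sub>R h + t *\<^sub>R k" by (simp add: algebra_simps)
  have "f (x + t *\<^sub>R k + t *\<^sub>R h) - f (x + t *\<^sub>R k) - f (x + t *\<^sub>R h) + f x = \<Delta>"
    unfolding \<Delta>_def eqv by (simp add: algebra_simps)
  then have E2': "norm (\<Delta> - (t*t) *\<^sub>R b) \<le> t*(t*e)" using E2 by simp
  have E1': "norm (\<Delta> - (t*t) *\<^sub>R a) \<le> t*(t*e)" using E1 unfolding \<Delta>_def by simp
  have "norm ((t*t) *\<^sub>R (a - b)) \<le> norm (\<Delta> - (t*t) *\<^sub>R b) + norm (\<Delta> - (t*t) *\<^sub>R a)"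
    by (rule order_trans[OF _ norm_triangle_ineq4]) (simp add: algebra_simps)
  also have "\<dots> \<le> 2 * (t*(t*e))" using E1' E2' by simp
  finally have "t * t * norm (a - b) \<le> 2 * (t * (t * e))" by simp
  then have "norm (a - b) \<le> 2 * e" using tpos by (simp add: mult.assoc)
  then show False using dpos unfolding e_def by simp
qed

lemma SS_diff: "open U \<Longrightarrow> SS U f \<Longrightarrow> x \<in> U \<Longrightarrow> f differentiable (at x)"
  using SS_step by metis

lemma SS_dirD: "open U \<Longrightarrow> SS U f \<Longrightarrow> SS U (dirD f h)"
  using SS_step by metis

lemma SS_schwarz:
  assumes "open U" "SS U f" "x \<in> U"
  shows "dirD (dirD f h) k x = dirD (dirD f k) h x"
proof (rule schwarz[OF assms(1,3)])
  have s1: "SS U (dirD f h)" "SS U (dirD f k)" using SS_dirD[OF assms(1,2)] by auto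
  have s2: "SS U (dirD (dirD f h) k)" "SS U (dirD (dirD f k) h)" using SS_dirD[OF assms(1)] s1 by auto
  show "\<forall>y\<in>U. f differentiable at y" "\<forall>y\<in>U. dirD f h differentiable at y" "\<forall>y\<in>U. dirD f k differentiable at y"
    using SS_diff[OF assms(1)] assms(2) s1 by auto
  show "isCont (dirD (dirD f h) k) x" "isCont (dirD (dirD f k) h) x"
    using SS_diff[OF assms(1) _ assms(3)] s2 differentiable_imp_continuous_within by auto
qed

definition eb :: "nat \<Rightarrow> pt" where
  "eb i = (if i = 0 then (1,0,0) else if i = 1 then (\<i>,0,0) else if i = 2 then (0,1,0)
           else if i = 3 then (0,\<i>,0) else (0,0,1))"

definition gop :: "(nat \<Rightarrow> pt \<Rightarrow> complex) \<Rightarrow> (pt \<Rightarrow> complex) \<Rightarrow> pt \<Rightarrow> complex" where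
  "gop a g x = (\<Sum>i<5. a i x * dirD g (eb i) x)"

lemma sum5: "(\<Sum>i<(5::nat). f i) = f 0 + f 1 + f 2 + f 3 + (f 4 :: 'a::comm_monoid_add)"
  by (simp add: eval_nat_numeral ac_simps)

lemma gop_expand: "gop a g x = a 0 x * dx1 g x + a 1 x * dy1 g x + a 2 x * dx2 g x + a 3 x * dy2 g x + a 4 x * dv g x"
  by (simp add: gop_def sum5 eb_def dx1_def dy1_def dx2_def dy2_def dv_def)

lemma dirD_sum:
  assumes "finite I" "\<And>i. i \<in> I \<Longrightarrow> f i differentiable (at x)"
  shows "dirD (\<lambda>y. \<Sum>i\<in>I. f i y) h x = (\<Sum>i\<in>I. dirD (f i) h x)"
proof -
  have "((\<lambda>y. \<Sum>i\<in>I. f i y) has_derivative (\<lambda>h. \<Sum>i\<in>I. dirD (f i) h x)) (at x)"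
    by (rule has_derivative_sum) (use assms dirD_works in auto)
  then show ?thesis by (rule dirD_eq)
qed

lemma SS_sum: "finite I \<Longrightarrow> (\<And>i. i \<in> I \<Longrightarrow> SS U (f i)) \<Longrightarrow> SS U (\<lambda>y. \<Sum>i\<in>I. f i y)"
proof (induction I rule: finite_induct)
  case empty
  then show ?case using SS.const[of U 0] by simp
next
  case (insert a F)
  have "SS U (\<lambda>y. f a y + (\<Sum>i\<in>F. f i y))" using insert by (intro SS.add) auto
  then show ?case using insert by simp
qed

lemma SS_gop: "open U \<Longrightarrow> (\<And>i. i < 5 \<Longrightarrow> SS U (a i)) \<Longrightarrow> SS U g \<Longrightarrow> SS U (gop a g)"
  unfolding gop_def[abs_def] by (intro SS_sum SS.mult SS_dirD) auto

lemma SS_mult': "SS U f \<Longrightarrow> SS U g \<Longrightarrow> SS U (\<lambda>x. f x * g x)" by (rule SS.mult)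
lemma SS_diff': "SS U f \<Longrightarrow> SS U g \<Longrightarrow> SS U (\<lambda>x. f x - g x)"
proof -
  assume "SS U f" "SS U g"
  then have "SS U (\<lambda>x. f x + (-1) * g x)" by (intro SS.add SS.mult SS.const)
  then show ?thesis by (rule SS.eq) simp
qed
lemma SS_divide: "SS U f \<Longrightarrow> SS U g \<Longrightarrow> \<forall>x\<in>U. g x \<noteq> 0 \<Longrightarrow> SS U (\<lambda>x. f x / g x)"
proof -
  assume "SS U f" "SS U g" "\<forall>x\<in>U. g x \<noteq> 0"
  then have "SS U (\<lambda>x. f x * inverse (g x))" by (intro SS.mult SS.inv)
  then show ?thesis by (rule SS.eq) (simp add: divide_inverse)
qed
lemma SS_minus: "SS U f \<Longrightarrow> SS U (\<lambda>x. - f x)"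
proof -
  assume "SS U f"
  then have "SS U (\<lambda>x. (-1) * f x)" by (intro SS.mult SS.const)
  then show ?thesis by (rule SS.eq) simp
qed

lemma gop_add: "f differentiable (at x) \<Longrightarrow> g differentiable (at x) \<Longrightarrow>
  gop a (\<lambda>y. f y + g y) x = gop a f x + gop a g x"
  by (simp add: gop_def dirD_add distrib_left sum.distrib)

lemma gop_diff: "f differentiable (at x) \<Longrightarrow> g differentiable (at x) \<Longrightarrow>
  gop a (\<lambda>y. f y - g y) x = gop a f x - gop a g x"
  by (simp add: gop_def dirD_diff right_diff_distrib sum_subtractf)

lemma gop_mult: "f differentiable (at x) \<Longrightarrow> g differentiable (at x) \<Longrightarrow>
  gop a (\<lambda>y. f y * g y) x = f x * gop a g x + g x * gop a f x"
  by (simp add: gop_def dirD_mult distrib_left sum.distrib sum_distrib_left algebra_simps)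

lemma gop_const: "gop a (\<lambda>y. c) x = 0"
  by (simp add: gop_def)

lemma gop_inverse: "f differentiable (at x) \<Longrightarrow> f x \<noteq> 0 \<Longrightarrow>
  gop a (\<lambda>y. inverse (f y)) x = - gop a f x / (f x * f x)"
proof -
  assume d: "f differentiable (at x)" "f x \<noteq> 0"
  have "gop a (\<lambda>y. inverse (f y)) x = (\<Sum>i<5. a i x * (- (inverse (f x) * dirD f (eb i) x * inverse (f x))))"
    unfolding gop_def dirD_inverse[OF d] ..
  also have "\<dots> = (\<Sum>i<5. - (a i x * dirD f (eb i) x) / (f x * f x))"
    by (rule sum.cong) (auto simp: field_simps)
  also have "\<dots> = - gop a f x / (f x * f x)"
    unfolding gop_def sum_divide_distrib[symmetric] sum_negf ..
  finally show ?thesis .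
qed

lemma gop_divide: "f differentiable (at x) \<Longrightarrow> g differentiable (at x) \<Longrightarrow> g x \<noteq> 0 \<Longrightarrow>
  gop a (\<lambda>y. f y / g y) x = (g x * gop a f x - f x * gop a g x) / (g x * g x)"
proof -
  assume d: "f differentiable (at x)" "g differentiable (at x)" "g x \<noteq> 0"
  have "gop a (\<lambda>y. f y / g y) x = gop a (\<lambda>y. f y * inverse (g y)) x" by (simp add: divide_inverse)
  also have "\<dots> = f x * gop a (\<lambda>y. inverse (g y)) x + inverse (g x) * gop a f x"
    using d by (intro gop_mult) (auto intro!: differentiable_inverse)
  also have "\<dots> = f x * (- gop a g x / (g x * g x)) + inverse (g x) * gop a f x"
    using gop_inverse[OF d(2,3)] by (simp only:)
  also have "\<dots> = (g x * gop a f x - f x * gop a g x) / (g x * g x)"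
    using d by (simp add: field_simps)
  finally show ?thesis .
qed

lemma gop_cnj: "f differentiable (at x) \<Longrightarrow>
  gop a (\<lambda>y. cnj (f y)) x = cnj (gop (\<lambda>i y. cnj (a i y)) f x)"
  by (simp add: gop_def dirD_cnj)

lemma gop_transfer: "f differentiable (at x) \<Longrightarrow> open U \<Longrightarrow> x \<in> U \<Longrightarrow> (\<And>y. y \<in> U \<Longrightarrow> f y = g y) \<Longrightarrow>
  gop a f x = gop a g x"
  unfolding gop_def using dirD_transfer[of f x U g] by simp

lemma dirD_gop:
  assumes U: "open U" "x \<in> U" and a: "\<And>i. i < 5 \<Longrightarrow> SS U (a i)" and g: "SS U g"
  shows "dirD (gop a g) h x = (\<Sum>i<5. dirD (a i) h x * dirD g (eb i) x + a i x * dirD (dirD g (eb i)) h x)"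
proof -
  have "dirD (gop a g) h x = dirD (\<lambda>y. \<Sum>i<5. a i y * dirD g (eb i) y) h x"
    unfolding gop_def ..
  also have "\<dots> = (\<Sum>i<5. dirD (\<lambda>y. a i y * dirD g (eb i) y) h x)"
    by (rule dirD_sum) (use U a g SS_diff SS_dirD in \<open>auto intro!: differentiable_mult\<close>)
  also have "\<dots> = (\<Sum>i<5. dirD (a i) h x * dirD g (eb i) x + a i x * dirD (dirD g (eb i)) h x)"
    by (rule sum.cong) (use U a g SS_diff SS_dirD in \<open>auto simp: dirD_mult\<close>)
  finally show ?thesis .
qed

lemma gop_comm:
  assumes U: "open U" "x \<in> U" and a: "\<And>i. i < 5 \<Longrightarrow> SS U (a i)" and b: "\<And>i. i < 5 \<Longrightarrow> SS U (b i)"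
    and g: "SS U g"
  shows "gop a (gop b g) x - gop b (gop a g) x = (\<Sum>i<5. (gop a (b i) x - gop b (a i) x) * dirD g (eb i) x)"
proof -
  define dd where "dd i j = dirD (dirD g (eb i)) (eb j) x" for i j
  have sym: "dd i j = dd j i" for i j unfolding dd_def using SS_schwarz[OF U(1) g U(2)] by simp
  have ex: "gop a (gop b g) x = (\<Sum>i<5. gop a (b i) x * dirD g (eb i) x) + (\<Sum>j<5. \<Sum>i<5. a j x * b i x * dd i j)"
    if a: "\<And>i. i < 5 \<Longrightarrow> SS U (a i)" and b: "\<And>i. i < 5 \<Longrightarrow> SS U (b i)" for a b
  proof -
    have "gop a (gop b g) x = (\<Sum>j<5. a j x * (\<Sum>i<5. dirD (b i) (eb j) x * dirD g (eb i) x + b i x * dd i j))"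
      unfolding gop_def[of a] dd_def using dirD_gop[OF U b g] by simp
    also have "\<dots> = (\<Sum>j<5. \<Sum>i<5. a j x * dirD (b i) (eb j) x * dirD g (eb i) x) + (\<Sum>j<5. \<Sum>i<5. a j x * b i x * dd i j)"
      by (simp add: sum_distrib_left distrib_left sum.distrib mult.assoc)
    also have "(\<Sum>j<5. \<Sum>i<5. a j x * dirD (b i) (eb j) x * dirD g (eb i) x) = (\<Sum>i<5. gop a (b i) x * dirD g (eb i) x)"
      by (subst sum.swap) (simp add: gop_def sum_distrib_right)
    finally show ?thesis .
  qed
  have "(\<Sum>j<5. \<Sum>i<5. a j x * b i x * dd i j) = (\<Sum>j<5. \<Sum>i<5. b j x * a i x * dd i j)"
    by (subst sum.swap) (simp add: sym mult.commute)
  then show ?thesis using ex[OF a b] ex[OF b a]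
    by (simp add: left_diff_distrib sum_subtractf)
qed

lemma rank1_det0:
  fixes A :: "complex^2^2"
  assumes "rank A = 1"
  shows "det A = 0"
proof -
  obtain B where B: "B \<subseteq> rows A" "vec.independent B" "rows A \<subseteq> vec.span B" "card B = vec.dim (rows A)"
    using vec.basis_exists by blast
  then have "card B = 1" using assms unfolding row_rank_def_gen by simp
  then obtain v where v: "B = {v}" using card_1_singletonE by blast
  have r: "\<exists>c. A $ i = c *s v" for i
  proof -
    have "row i A \<in> rows A" unfolding rows_def by blast
    then have "row i A \<in> vec.span {v}" using B v by blast
    then obtain c where "row i A = c *s v" unfolding vec.span_singleton by blast
    moreover have "row i A = A $ i" unfolding row_def by (simp add: vec_eq_iff)
    ultimately show ?thesis by auto
  qed
  obtain c1 where c1: "A $ 1 = c1 *s v" using r by blast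
  obtain c2 where c2: "A $ 2 = c2 *s v" using r by blast
  show ?thesis unfolding det_2 c1 c2 by simp
qed

definition isop :: "pt set \<Rightarrow> ((pt \<Rightarrow> complex) \<Rightarrow> pt \<Rightarrow> complex) \<Rightarrow> bool" where
  "isop U Op \<longleftrightarrow> (\<exists>a. (\<forall>i<5. SS U (a i)) \<and> (\<forall>g x. Op g x = gop a g x))"

context
  fixes U :: "pt set" assumes U: "open U"
begin

lemma isopE: assumes "isop U Op" obtains a where "\<And>i. i < 5 \<Longrightarrow> SS U (a i)" "\<And>g x. Op g x = gop a g x"
  using assms unfolding isop_def by blast

lemma op_SS: "isop U Op \<Longrightarrow> SS U g \<Longrightarrow> SS U (Op g)"
proof -
  assume o: "isop U Op" and g: "SS U g"
  obtain a where a: "\<And>i. i < 5 \<Longrightarrow> SS U (a i)" "\<And>g x. Op g x = gop a g x" using isopE[OF o] by blast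
  have "SS U (gop a g)" using SS_gop[OF U _ g] a(1) by blast
  then show ?thesis by (rule SS.eq) (simp add: a(2))
qed

lemma op_add: "isop U Op \<Longrightarrow> SS U f \<Longrightarrow> SS U g \<Longrightarrow> x \<in> U \<Longrightarrow> Op (\<lambda>y. f y + g y) x = Op f x + Op g x"
  by (erule isopE) (simp add: gop_add SS_diff[OF U])

lemma op_diff: "isop U Op \<Longrightarrow> SS U f \<Longrightarrow> SS U g \<Longrightarrow> x \<in> U \<Longrightarrow> Op (\<lambda>y. f y - g y) x = Op f x - Op g x"
  by (erule isopE) (simp add: gop_diff SS_diff[OF U])

lemma op_mult: "isop U Op \<Longrightarrow> SS U f \<Longrightarrow> SS U g \<Longrightarrow> x \<in> U \<Longrightarrow> Op (\<lambda>y. f y * g y) x = f x * Op g x + g x * Op f x"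
  by (erule isopE) (simp add: gop_mult SS_diff[OF U])

lemma op_const: "isop U Op \<Longrightarrow> Op (\<lambda>y. c) x = 0"
  by (erule isopE) (simp add: gop_const)

lemma op_divide: "isop U Op \<Longrightarrow> SS U f \<Longrightarrow> SS U g \<Longrightarrow> x \<in> U \<Longrightarrow> g x \<noteq> 0 \<Longrightarrow>
   Op (\<lambda>y. f y / g y) x = (g x * Op f x - f x * Op g x) / (g x * g x)"
  by (erule isopE) (simp add: gop_divide SS_diff[OF U])

lemma op_transfer: "isop U Op \<Longrightarrow> SS U f \<Longrightarrow> x \<in> U \<Longrightarrow> (\<And>y. y \<in> U \<Longrightarrow> f y = g y) \<Longrightarrow> Op f x = Op g x"
  by (erule isopE) (metis gop_transfer SS_diff[OF U] U)

lemma op_zero: "isop U Op \<Longrightarrow> x \<in> U \<Longrightarrow> (\<And>y. y \<in> U \<Longrightarrow> f y = 0) \<Longrightarrow> Op f x = 0"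
proof -
  assume o: "isop U Op" "x \<in> U" "\<And>y. y \<in> U \<Longrightarrow> f y = 0"
  have "Op (\<lambda>y. 0) x = Op f x" by (rule op_transfer) (use o SS.const in auto)
  then show ?thesis using op_const[OF o(1)] by simp
qed

lemma isop_comb: "isop U Op1 \<Longrightarrow> isop U Op2 \<Longrightarrow> SS U c \<Longrightarrow> isop U (\<lambda>g x. c x * Op1 g x + Op2 g x)"
proof -
  assume o1: "isop U Op1" and o2: "isop U Op2" and c: "SS U c"
  obtain a where a: "\<And>i. i < 5 \<Longrightarrow> SS U (a i)" "\<And>g x. Op1 g x = gop a g x" using isopE[OF o1] by blast
  obtain b where b: "\<And>i. i < 5 \<Longrightarrow> SS U (b i)" "\<And>g x. Op2 g x = gop b g x" using isopE[OF o2] by blast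
  show ?thesis unfolding isop_def
  proof (intro exI conjI allI impI)
    fix i :: nat assume "i < 5"
    then show "SS U (\<lambda>x. c x * a i x + b i x)" using a b c by (intro SS.add SS.mult) auto
  next
    fix g x
    show "c x * Op1 g x + Op2 g x = gop (\<lambda>i x. c x * a i x + b i x) g x"
      unfolding a(2) b(2) gop_def by (simp add: sum_distrib_left sum.distrib algebra_simps)
  qed
qed

lemma isop_scale: "isop U Op1 \<Longrightarrow> SS U c \<Longrightarrow> isop U (\<lambda>g x. c x * Op1 g x)"
proof -
  assume o1: "isop U Op1" and c: "SS U c"
  obtain a where a: "\<And>i. i < 5 \<Longrightarrow> SS U (a i)" "\<And>g x. Op1 g x = gop a g x" using isopE[OF o1] by blast
  show ?thesis unfolding isop_def
  proof (intro exI conjI allI impI)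
    fix i :: nat assume "i < 5"
    then show "SS U (\<lambda>x. c x * a i x)" using a c by (intro SS.mult) auto
  next
    fix g x
    show "c x * Op1 g x = gop (\<lambda>i x. c x * a i x) g x"
      unfolding a(2) gop_def by (simp add: sum_distrib_left algebra_simps)
  qed
qed

end


definition cL1 :: "(pt \<Rightarrow> real) \<Rightarrow> nat \<Rightarrow> pt \<Rightarrow> complex" where
  "cL1 F = (\<lambda>i. if i = 0 then (\<lambda>x. 1/2) else if i = 1 then (\<lambda>x. -\<i>/2) else if i = 4 then A1 F else (\<lambda>x. 0))"
definition cLb1 :: "(pt \<Rightarrow> real) \<Rightarrow> nat \<Rightarrow> pt \<Rightarrow> complex" where
  "cLb1 F = (\<lambda>i. if i = 0 then (\<lambda>x. 1/2) else if i = 1 then (\<lambda>x. \<i>/2) else if i = 4 then (\<lambda>x. cnj (A1 F x)) else (\<lambda>x. 0))"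
definition cL2 :: "(pt \<Rightarrow> real) \<Rightarrow> nat \<Rightarrow> pt \<Rightarrow> complex" where
  "cL2 F = (\<lambda>i. if i = 2 then (\<lambda>x. 1/2) else if i = 3 then (\<lambda>x. -\<i>/2) else if i = 4 then A2 F else (\<lambda>x. 0))"
definition cLb2 :: "(pt \<Rightarrow> real) \<Rightarrow> nat \<Rightarrow> pt \<Rightarrow> complex" where
  "cLb2 F = (\<lambda>i. if i = 2 then (\<lambda>x. 1/2) else if i = 3 then (\<lambda>x. \<i>/2) else if i = 4 then (\<lambda>x. cnj (A2 F x)) else (\<lambda>x. 0))"
definition cD :: "nat \<Rightarrow> pt \<Rightarrow> complex" where
  "cD = (\<lambda>i. if i = 4 then (\<lambda>x. 1) else (\<lambda>x. 0))"

lemma L1_gop: "L1op F g x = gop (cL1 F) g x"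
  by (simp add: gop_expand cL1_def L1op_def dz1_def algebra_simps diff_divide_distrib)
lemma Lb1_gop: "Lb1op F g x = gop (cLb1 F) g x"
  by (simp add: gop_expand cLb1_def Lb1op_def dzb1_def algebra_simps add_divide_distrib)
lemma L2_gop: "L2op F g x = gop (cL2 F) g x"
  by (simp add: gop_expand cL2_def L2op_def dz2_def algebra_simps diff_divide_distrib)
lemma Lb2_gop: "Lb2op F g x = gop (cLb2 F) g x"
  by (simp add: gop_expand cLb2_def Lb2op_def dzb2_def algebra_simps add_divide_distrib)
lemma D_gop: "dv g x = gop cD g x"
  by (simp add: gop_expand cD_def)

definition Kbop :: "(pt \<Rightarrow> real) \<Rightarrow> (pt \<Rightarrow> complex) \<Rightarrow> pt \<Rightarrow> complex" where
  "Kbop F g x = cnj (kk F x) * Lb1op F g x + Lb2op F g x"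

definition vfun :: "pt \<Rightarrow> complex" where "vfun q = complex_of_real (snd (snd q))"

lemma vfun_bl: "bounded_linear vfun"
  unfolding vfun_def
  by (intro bounded_linear_compose[OF bounded_linear_of_real] bounded_linear_compose[OF bounded_linear_snd] bounded_linear_snd)

lemma vfun_dirD: "dirD vfun h x = complex_of_real (snd (snd h))"
  using dirD_linear[OF vfun_bl] by (simp add: vfun_def)

locale CR =
  fixes F :: "pt \<Rightarrow> real" and U :: "pt set"
  assumes U: "open U" and Fs: "smooth_on U F"
    and ellnz: "\<And>x. x \<in> U \<Longrightarrow> ell F x \<noteq> 0"
    and rk: "\<And>x. x \<in> U \<Longrightarrow> rank (levi F x) = 1"
    and mnz: "\<And>x. x \<in> U \<Longrightarrow> Lb1op F (kk F) x \<noteq> 0"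
begin

lemma SS_Fc: "SS U (Fc F)"
proof -
  have "SS U (\<lambda>x. complex_of_real (F x))" by (rule SS.real[OF Fs])
  then show ?thesis by (rule SS.eq) (simp add: Fc_def)
qed

lemma SS_dx1: "SS U g \<Longrightarrow> SS U (dx1 g)" unfolding dx1_def by (rule SS_dirD[OF U])
lemma SS_dy1: "SS U g \<Longrightarrow> SS U (dy1 g)" unfolding dy1_def by (rule SS_dirD[OF U])
lemma SS_dx2: "SS U g \<Longrightarrow> SS U (dx2 g)" unfolding dx2_def by (rule SS_dirD[OF U])
lemma SS_dy2: "SS U g \<Longrightarrow> SS U (dy2 g)" unfolding dy2_def by (rule SS_dirD[OF U])
lemma SS_dv: "SS U g \<Longrightarrow> SS U (dv g)" unfolding dv_def by (rule SS_dirD[OF U])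

lemma SS_half: "SS U f \<Longrightarrow> SS U g \<Longrightarrow> SS U (\<lambda>x. (f x + c * g x) / 2)"
  by (intro SS_divide SS.add SS.mult SS.const) auto

lemma SS_dz1: "SS U g \<Longrightarrow> SS U (dz1 g)"
proof -
  assume g: "SS U g"
  have "SS U (\<lambda>x. (dx1 g x + (-\<i>) * dy1 g x) / 2)" by (intro SS_half SS_dx1 SS_dy1 g)
  then show ?thesis by (rule SS.eq) (simp add: dz1_def)
qed
lemma SS_dz2: "SS U g \<Longrightarrow> SS U (dz2 g)"
proof -
  assume g: "SS U g"
  have "SS U (\<lambda>x. (dx2 g x + (-\<i>) * dy2 g x) / 2)" by (intro SS_half SS_dx2 SS_dy2 g)
  then show ?thesis by (rule SS.eq) (simp add: dz2_def)
qed

lemma F_diff: "x \<in> U \<Longrightarrow> F differentiable (at x)"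
  using smooth_diff_at[OF Fs U] .

lemma dvFc: "x \<in> U \<Longrightarrow> dv (Fc F) x = complex_of_real (dirD F (0,0,1) x)"
proof -
  assume x: "x \<in> U"
  have "Fc F = (\<lambda>y. complex_of_real (F y))" by (simp add: Fc_def[abs_def])
  then show ?thesis unfolding dv_def using dirD_ofreal[OF F_diff[OF x]] by simp
qed

lemma den_nz: "x \<in> U \<Longrightarrow> 1 + \<i> * dv (Fc F) x \<noteq> 0"
proof
  assume x: "x \<in> U" and e: "1 + \<i> * dv (Fc F) x = 0"
  have "Re (1 + \<i> * dv (Fc F) x) = 1" using dvFc[OF x] by simp
  then show False using e by simp
qed

lemma SS_den: "SS U (\<lambda>x. 1 + \<i> * dv (Fc F) x)"
  by (intro SS.add SS.mult SS.const SS_dv SS_Fc)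

lemma SS_A1: "SS U (A1 F)"
proof -
  have "SS U (\<lambda>x. (-\<i>) * dz1 (Fc F) x / (1 + \<i> * dv (Fc F) x))"
    by (intro SS_divide SS.mult SS.const SS_dz1 SS_Fc SS_den) (use den_nz in auto)
  then show ?thesis by (rule SS.eq) (simp add: A1_def)
qed
lemma SS_A2: "SS U (A2 F)"
proof -
  have "SS U (\<lambda>x. (-\<i>) * dz2 (Fc F) x / (1 + \<i> * dv (Fc F) x))"
    by (intro SS_divide SS.mult SS.const SS_dz2 SS_Fc SS_den) (use den_nz in auto)
  then show ?thesis by (rule SS.eq) (simp add: A2_def)
qed
lemma SS_B1: "SS U (\<lambda>x. cnj (A1 F x))" by (intro SS.cnj SS_A1)
lemma SS_B2: "SS U (\<lambda>x. cnj (A2 F x))" by (intro SS.cnj SS_A2)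

lemma less5: "(i::nat) < 5 \<Longrightarrow> i = 0 \<or> i = 1 \<or> i = 2 \<or> i = 3 \<or> i = 4" by auto

lemma isop_L1: "isop U (L1op F)"
  unfolding isop_def
proof (intro exI conjI allI impI)
  fix i :: nat assume "i < 5" then show "SS U (cL1 F i)"
    using less5 SS.const SS_A1 unfolding cL1_def by auto
qed (rule L1_gop)
lemma isop_Lb1: "isop U (Lb1op F)"
  unfolding isop_def
proof (intro exI conjI allI impI)
  fix i :: nat assume "i < 5" then show "SS U (cLb1 F i)"
    using less5 SS.const SS_B1 unfolding cLb1_def by auto
qed (rule Lb1_gop)
lemma isop_L2: "isop U (L2op F)"
  unfolding isop_def
proof (intro exI conjI allI impI)
  fix i :: nat assume "i < 5" then show "SS U (cL2 F i)"
    using less5 SS.const SS_A2 unfolding cL2_def by auto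
qed (rule L2_gop)
lemma isop_Lb2: "isop U (Lb2op F)"
  unfolding isop_def
proof (intro exI conjI allI impI)
  fix i :: nat assume "i < 5" then show "SS U (cLb2 F i)"
    using less5 SS.const SS_B2 unfolding cLb2_def by auto
qed (rule Lb2_gop)
lemma isop_D: "isop U dv"
  unfolding isop_def
proof (intro exI conjI allI impI)
  fix i :: nat assume "i < 5" then show "SS U (cD i)"
    using less5 SS.const unfolding cD_def by auto
qed (rule D_gop)

lemma cnj_L1: "g differentiable (at x) \<Longrightarrow> cnj (L1op F g x) = Lb1op F (\<lambda>y. cnj (g y)) x"
  by (simp add: L1op_def Lb1op_def dz1_def dzb1_def dx1_def dy1_def dv_def dirD_cnj)
lemma cnj_L2: "g differentiable (at x) \<Longrightarrow> cnj (L2op F g x) = Lb2op F (\<lambda>y. cnj (g y)) x"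
  by (simp add: L2op_def Lb2op_def dz2_def dzb2_def dx2_def dy2_def dv_def dirD_cnj)
lemma cnj_Lb1: "g differentiable (at x) \<Longrightarrow> cnj (Lb1op F g x) = L1op F (\<lambda>y. cnj (g y)) x"
  by (simp add: L1op_def Lb1op_def dz1_def dzb1_def dx1_def dy1_def dv_def dirD_cnj)
lemma cnj_Lb2: "g differentiable (at x) \<Longrightarrow> cnj (Lb2op F g x) = L2op F (\<lambda>y. cnj (g y)) x"
  by (simp add: L2op_def Lb2op_def dz2_def dzb2_def dx2_def dy2_def dv_def dirD_cnj)
lemma cnj_D: "g differentiable (at x) \<Longrightarrow> cnj (dv g x) = dv (\<lambda>y. cnj (g y)) x"
  by (simp add: dv_def dirD_cnj)


lemma SS_ell: "SS U (ell F)"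
proof -
  have "SS U (\<lambda>x. \<i> * (L1op F (\<lambda>q. cnj (A1 F q)) x - Lb1op F (A1 F) x))"
    by (intro SS.mult SS.const SS_diff' op_SS[OF U isop_L1 SS_B1] op_SS[OF U isop_Lb1 SS_A1])
  then show ?thesis by (rule SS.eq) (simp add: ell_def)
qed

lemma H11: "L1op F (\<lambda>q. cnj (A1 F q)) x - Lb1op F (A1 F) x = - \<i> * ell F x"
  by (simp add: ell_def)

lemma SS_kk: "SS U (kk F)"
proof -
  have "SS U (\<lambda>x. - (L2op F (\<lambda>q. cnj (A1 F q)) x - Lb1op F (A2 F) x) / (L1op F (\<lambda>q. cnj (A1 F q)) x - Lb1op F (A1 F) x))"
    by (intro SS_divide SS_minus SS_diff' op_SS[OF U isop_L1 SS_B1] op_SS[OF U isop_Lb1 SS_A1]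
         op_SS[OF U isop_L2 SS_B1] op_SS[OF U isop_Lb1 SS_A2])
       (use ellnz in \<open>auto simp: H11\<close>)
  then show ?thesis by (rule SS.eq) (simp add: kk_def)
qed

lemma SS_kkb: "SS U (\<lambda>x. cnj (kk F x))" by (intro SS.cnj SS_kk)

lemma isop_K: "isop U (Kop F)"
proof -
  have "isop U (\<lambda>g x. kk F x * L1op F g x + L2op F g x)"
    by (intro isop_comb[OF U] isop_L1 isop_L2 SS_kk)
  then show ?thesis by (simp add: Kop_def[abs_def])
qed
lemma isop_Kb: "isop U (Kbop F)"
proof -
  have "isop U (\<lambda>g x. cnj (kk F x) * Lb1op F g x + Lb2op F g x)"
    by (intro isop_comb[OF U] isop_Lb1 isop_Lb2 SS_kkb)
  then show ?thesis by (simp add: Kbop_def[abs_def])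
qed
lemma isop_T: "isop U (Top F)"
proof -
  have "isop U (\<lambda>g x. ell F x * dv g x)"
    by (intro isop_scale[OF U] isop_D SS_ell)
  then show ?thesis by (simp add: Top_def[abs_def])
qed

lemma gop_comm_v:
  assumes x: "x \<in> U" and a: "\<And>i. i < 5 \<Longrightarrow> SS U (a i)" and b: "\<And>i. i < 5 \<Longrightarrow> SS U (b i)"
    and g: "SS U g"
    and ca: "\<And>i. i < 4 \<Longrightarrow> \<exists>c. a i = (\<lambda>x. c)" and cb: "\<And>i. i < 4 \<Longrightarrow> \<exists>c. b i = (\<lambda>x. c)"
  shows "gop a (gop b g) x - gop b (gop a g) x = (gop a (b 4) x - gop b (a 4) x) * dv g x"
proof -
  have z: "gop a (b i) x - gop b (a i) x = 0" if i4: "i < 4" for i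
  proof -
    obtain c1 where "a i = (\<lambda>x. c1)" using ca[OF i4] by blast
    moreover obtain c2 where "b i = (\<lambda>x. c2)" using cb[OF i4] by blast
    ultimately show ?thesis by (simp add: gop_const)
  qed
  have "gop a (gop b g) x - gop b (gop a g) x = (\<Sum>i<5. (gop a (b i) x - gop b (a i) x) * dirD g (eb i) x)"
    by (rule gop_comm[OF U x a b g])
  also have "\<dots> = (gop a (b 4) x - gop b (a 4) x) * dv g x"
    unfolding sum5 using z[of 0] z[of 1] z[of 2] z[of 3] by (simp add: eb_def dv_def)
  finally show ?thesis .
qed

lemma L1_fun: "L1op F = gop (cL1 F)" by (intro ext) (rule L1_gop)
lemma L2_fun: "L2op F = gop (cL2 F)" by (intro ext) (rule L2_gop)
lemma Lb1_fun: "Lb1op F = gop (cLb1 F)" by (intro ext) (rule Lb1_gop)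
lemma Lb2_fun: "Lb2op F = gop (cLb2 F)" by (intro ext) (rule Lb2_gop)
lemma D_fun: "dv = gop cD" by (intro ext) (rule D_gop)

lemmas cdefs = cL1_def cL2_def cLb1_def cLb2_def cD_def

lemma SS_cL1: "i < 5 \<Longrightarrow> SS U (cL1 F i)" using less5 SS.const SS_A1 unfolding cL1_def by auto
lemma SS_cL2: "i < 5 \<Longrightarrow> SS U (cL2 F i)" using less5 SS.const SS_A2 unfolding cL2_def by auto
lemma SS_cLb1: "i < 5 \<Longrightarrow> SS U (cLb1 F i)" using less5 SS.const SS_B1 unfolding cLb1_def by auto
lemma SS_cLb2: "i < 5 \<Longrightarrow> SS U (cLb2 F i)" using less5 SS.const SS_B2 unfolding cLb2_def by auto
lemma SS_cD: "i < 5 \<Longrightarrow> SS U (cD i)" using less5 SS.const unfolding cD_def by auto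

lemma const_cL1: "i < 4 \<Longrightarrow> \<exists>c. cL1 F i = (\<lambda>x. c)" unfolding cL1_def by auto
lemma const_cL2: "i < 4 \<Longrightarrow> \<exists>c. cL2 F i = (\<lambda>x. c)" unfolding cL2_def by auto
lemma const_cLb1: "i < 4 \<Longrightarrow> \<exists>c. cLb1 F i = (\<lambda>x. c)" unfolding cLb1_def by auto
lemma const_cLb2: "i < 4 \<Longrightarrow> \<exists>c. cLb2 F i = (\<lambda>x. c)" unfolding cLb2_def by auto
lemma const_cD: "i < 4 \<Longrightarrow> \<exists>c. cD i = (\<lambda>x. c)" unfolding cD_def by auto

lemmas SS_c = SS_cL1 SS_cL2 SS_cLb1 SS_cLb2 SS_cD
lemmas const_c = const_cL1 const_cL2 const_cLb1 const_cLb2 const_cD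

lemma c4: "cL1 F 4 = A1 F" "cL2 F 4 = A2 F" "cLb1 F 4 = (\<lambda>x. cnj (A1 F x))" "cLb2 F 4 = (\<lambda>x. cnj (A2 F x))"
  "cD 4 = (\<lambda>x. 1)"
  by (simp_all add: cdefs)

lemma comm_L1_L2: "SS U g \<Longrightarrow> x \<in> U \<Longrightarrow>
  L1op F (L2op F g) x - L2op F (L1op F g) x = (L1op F (A2 F) x - L2op F (A1 F) x) * dv g x"
  unfolding L1_fun L2_fun using gop_comm_v[OF _ SS_cL1 SS_cL2 _ const_cL1 const_cL2] by (simp add: c4)
lemma comm_L1_Lb1: "SS U g \<Longrightarrow> x \<in> U \<Longrightarrow>
  L1op F (Lb1op F g) x - Lb1op F (L1op F g) x = (L1op F (\<lambda>x. cnj (A1 F x)) x - Lb1op F (A1 F) x) * dv g x"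
  unfolding L1_fun Lb1_fun using gop_comm_v[OF _ SS_cL1 SS_cLb1 _ const_cL1 const_cLb1] by (simp add: c4)
lemma comm_L1_Lb2: "SS U g \<Longrightarrow> x \<in> U \<Longrightarrow>
  L1op F (Lb2op F g) x - Lb2op F (L1op F g) x = (L1op F (\<lambda>x. cnj (A2 F x)) x - Lb2op F (A1 F) x) * dv g x"
  unfolding L1_fun Lb2_fun using gop_comm_v[OF _ SS_cL1 SS_cLb2 _ const_cL1 const_cLb2] by (simp add: c4)
lemma comm_L2_Lb1: "SS U g \<Longrightarrow> x \<in> U \<Longrightarrow>
  L2op F (Lb1op F g) x - Lb1op F (L2op F g) x = (L2op F (\<lambda>x. cnj (A1 F x)) x - Lb1op F (A2 F) x) * dv g x"
  unfolding L2_fun Lb1_fun using gop_comm_v[OF _ SS_cL2 SS_cLb1 _ const_cL2 const_cLb1] by (simp add: c4)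
lemma comm_L2_Lb2: "SS U g \<Longrightarrow> x \<in> U \<Longrightarrow>
  L2op F (Lb2op F g) x - Lb2op F (L2op F g) x = (L2op F (\<lambda>x. cnj (A2 F x)) x - Lb2op F (A2 F) x) * dv g x"
  unfolding L2_fun Lb2_fun using gop_comm_v[OF _ SS_cL2 SS_cLb2 _ const_cL2 const_cLb2] by (simp add: c4)
lemma comm_Lb1_Lb2: "SS U g \<Longrightarrow> x \<in> U \<Longrightarrow>
  Lb1op F (Lb2op F g) x - Lb2op F (Lb1op F g) x = (Lb1op F (\<lambda>x. cnj (A2 F x)) x - Lb2op F (\<lambda>x. cnj (A1 F x)) x) * dv g x"
  unfolding Lb1_fun Lb2_fun using gop_comm_v[OF _ SS_cLb1 SS_cLb2 _ const_cLb1 const_cLb2] by (simp add: c4)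
lemma comm_L1_D: "SS U g \<Longrightarrow> x \<in> U \<Longrightarrow>
  L1op F (dv g) x - dv (L1op F g) x = - dv (A1 F) x * dv g x"
  unfolding L1_fun D_fun using gop_comm_v[OF _ SS_cL1 SS_cD _ const_cL1 const_cD] by (simp add: c4 gop_const D_gop)
lemma comm_L2_D: "SS U g \<Longrightarrow> x \<in> U \<Longrightarrow>
  L2op F (dv g) x - dv (L2op F g) x = - dv (A2 F) x * dv g x"
  unfolding L2_fun D_fun using gop_comm_v[OF _ SS_cL2 SS_cD _ const_cL2 const_cD] by (simp add: c4 gop_const D_gop)
lemma comm_Lb1_D: "SS U g \<Longrightarrow> x \<in> U \<Longrightarrow>
  Lb1op F (dv g) x - dv (Lb1op F g) x = - dv (\<lambda>x. cnj (A1 F x)) x * dv g x"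
  unfolding Lb1_fun D_fun using gop_comm_v[OF _ SS_cLb1 SS_cD _ const_cLb1 const_cD] by (simp add: c4 gop_const D_gop)
lemma comm_Lb2_D: "SS U g \<Longrightarrow> x \<in> U \<Longrightarrow>
  Lb2op F (dv g) x - dv (Lb2op F g) x = - dv (\<lambda>x. cnj (A2 F x)) x * dv g x"
  unfolding Lb2_fun D_fun using gop_comm_v[OF _ SS_cLb2 SS_cD _ const_cLb2 const_cD] by (simp add: c4 gop_const D_gop)

end

context CR begin

abbreviation "qa1 \<equiv> A1 F"
abbreviation "qa2 \<equiv> A2 F"
abbreviation "qb1 \<equiv> (\<lambda>q. cnj (A1 F q))"
abbreviation "qb2 \<equiv> (\<lambda>q. cnj (A2 F q))"
abbreviation "ql \<equiv> ell F"
abbreviation "qk \<equiv> kk F"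
abbreviation "qkb \<equiv> (\<lambda>q. cnj (kk F q))"
abbreviation "QL1 \<equiv> L1op F"
abbreviation "QL2 \<equiv> L2op F"
abbreviation "QLb1 \<equiv> Lb1op F"
abbreviation "QLb2 \<equiv> Lb2op F"
abbreviation "QK \<equiv> Kop F"
abbreviation "QKb \<equiv> Kbop F"

lemmas ops = isop_L1 isop_L2 isop_Lb1 isop_Lb2 isop_D isop_K isop_Kb isop_T
lemmas SSb = SS_A1 SS_A2 SS_B1 SS_B2 SS_ell SS_kk SS_kkb SS_Fc

lemma SSop: "SS U g \<Longrightarrow> SS U (QL1 g)" "SS U g \<Longrightarrow> SS U (QL2 g)" "SS U g \<Longrightarrow> SS U (QLb1 g)"
  "SS U g \<Longrightarrow> SS U (QLb2 g)" "SS U g \<Longrightarrow> SS U (dv g)" "SS U g \<Longrightarrow> SS U (QK g)" "SS U g \<Longrightarrow> SS U (QKb g)"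
  "SS U g \<Longrightarrow> SS U (Top F g)"
  using op_SS[OF U] ops by blast+

lemma diffU: "SS U g \<Longrightarrow> x \<in> U \<Longrightarrow> g differentiable (at x)" using SS_diff[OF U] by blast

lemma lreal: "x \<in> U \<Longrightarrow> cnj (ql x) = ql x"
proof -
  assume x: "x \<in> U"
  have "cnj (ql x) = - \<i> * (cnj (QL1 qb1 x) - cnj (QLb1 qa1 x))" by (simp add: ell_def)
  also have "\<dots> = - \<i> * (QLb1 qa1 x - QL1 qb1 x)"
    using cnj_L1[OF diffU[OF SS_B1 x]] cnj_Lb1[OF diffU[OF SS_A1 x]] by simp
  also have "\<dots> = ql x" by (simp add: ell_def algebra_simps)
  finally show ?thesis .
qed

lemma lreal_fun: "x \<in> U \<Longrightarrow> Op (\<lambda>y. cnj (ql y)) x = Op ql x" if "isop U Op"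
  by (rule op_transfer[OF U that]) (auto intro: SS.cnj SS_ell simp: lreal)

lemma H11': "x \<in> U \<Longrightarrow> QL1 qb1 x - QLb1 qa1 x \<noteq> 0"
  using ellnz by (simp add: H11)

lemma H21: "x \<in> U \<Longrightarrow> QL2 qb1 x - QLb1 qa2 x = \<i> * qk x * ql x"
proof -
  assume x: "x \<in> U"
  have "qk x * (QL1 qb1 x - QLb1 qa1 x) = - (QL2 qb1 x - QLb1 qa2 x)"
    using H11'[OF x] by (simp add: kk_def)
  then show ?thesis by (simp add: H11 algebra_simps)
qed

lemma H12: "x \<in> U \<Longrightarrow> QL1 qb2 x - QLb2 qa1 x = \<i> * qkb x * ql x"
proof -
  assume x: "x \<in> U"
  have "cnj (QL2 qb1 x - QLb1 qa2 x) = QLb2 qa1 x - QL1 qb2 x"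
    using cnj_L2[OF diffU[OF SS_B1 x]] cnj_Lb1[OF diffU[OF SS_A2 x]] by simp
  then have "QL1 qb2 x - QLb2 qa1 x = - cnj (\<i> * qk x * ql x)" using H21[OF x] by simp
  then show ?thesis using lreal[OF x] by simp
qed

lemma levi_entries: "levi F x $ 1 $ 1 = \<i> * (QL1 qb1 x - QLb1 qa1 x)"
  "levi F x $ 1 $ 2 = \<i> * (QL1 qb2 x - QLb2 qa1 x)"
  "levi F x $ 2 $ 1 = \<i> * (QL2 qb1 x - QLb1 qa2 x)"
  "levi F x $ 2 $ 2 = \<i> * (QL2 qb2 x - QLb2 qa2 x)"
  by (simp_all add: levi_def Lop_def Lbop_def Aj_def)

lemma H22: "x \<in> U \<Longrightarrow> QL2 qb2 x - QLb2 qa2 x = - \<i> * qk x * qkb x * ql x"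
proof -
  assume x: "x \<in> U"
  have "det (levi F x) = 0" using rank1_det0 rk[OF x] by blast
  then have "(\<i> * (QL1 qb1 x - QLb1 qa1 x)) * (\<i> * (QL2 qb2 x - QLb2 qa2 x))
     - (\<i> * (QL1 qb2 x - QLb2 qa1 x)) * (\<i> * (QL2 qb1 x - QLb1 qa2 x)) = 0"
    unfolding det_2 levi_entries .
  then have "(- \<i> * ql x) * (QL2 qb2 x - QLb2 qa2 x) = (\<i> * qkb x * ql x) * (\<i> * qk x * ql x)"
    unfolding H11 H12[OF x] H21[OF x] by (simp add: algebra_simps)
  then have "\<i> * ql x * ((QL2 qb2 x - QLb2 qa2 x) + \<i> * qk x * qkb x * ql x) = 0"
    by (simp add: algebra_simps)
  then have "(QL2 qb2 x - QLb2 qa2 x) + \<i> * qk x * qkb x * ql x = 0"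
    by (metis mult_eq_0_iff complex_i_not_zero ellnz x)
  then have "QL2 qb2 x - QLb2 qa2 x = - (\<i> * qk x * qkb x * ql x)"
    using eq_neg_iff_add_eq_0 by blast
  then show ?thesis by simp
qed

definition Gf :: "pt \<Rightarrow> complex" where "Gf q = Fc F q - \<i> * vfun q"

lemma SS_G: "SS U Gf"
proof -
  have "SS U (\<lambda>q. Fc F q - \<i> * vfun q)" by (intro SS_diff' SS.mult SS.const SS_Fc SS.lin vfun_bl)
  then show ?thesis by (rule SS.eq) (simp add: Gf_def)
qed

lemma vfun_ops: "QL1 vfun x = qa1 x" "QL2 vfun x = qa2 x" "dv vfun x = 1"
  by (simp_all add: L1op_def L2op_def dz1_def dz2_def dx1_def dy1_def dx2_def dy2_def dv_def vfun_dirD)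

lemma LG: "x \<in> U \<Longrightarrow> QL1 Gf x = 0" "x \<in> U \<Longrightarrow> QL2 Gf x = 0"
proof -
  assume x: "x \<in> U"
  have G: "Gf = (\<lambda>q. Fc F q - \<i> * vfun q)" by (simp add: Gf_def[abs_def])
  have sv: "SS U vfun" by (rule SS.lin[OF vfun_bl])
  have e1: "QL1 Gf x = QL1 (Fc F) x - \<i> * qa1 x"
    unfolding G using op_diff[OF U isop_L1 SS_Fc SS.mult[OF SS.const sv] x] op_mult[OF U isop_L1 SS.const sv x]
      op_const[OF U isop_L1] vfun_ops by simp
  have e2: "QL2 Gf x = QL2 (Fc F) x - \<i> * qa2 x"
    unfolding G using op_diff[OF U isop_L2 SS_Fc SS.mult[OF SS.const sv] x] op_mult[OF U isop_L2 SS.const sv x]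
      op_const[OF U isop_L2] vfun_ops by simp
  have d: "1 + \<i> * dv (Fc F) x \<noteq> 0" using den_nz[OF x] .
  show "QL1 Gf x = 0" unfolding e1 using d
    by (simp add: L1op_def A1_def field_simps)
  show "QL2 Gf x = 0" unfolding e2 using d
    by (simp add: L2op_def A2_def field_simps)
qed

lemma DG_nz: "x \<in> U \<Longrightarrow> dv Gf x \<noteq> 0"
proof
  assume x: "x \<in> U" and e: "dv Gf x = 0"
  have sv: "SS U vfun" by (rule SS.lin[OF vfun_bl])
  have G: "Gf = (\<lambda>q. Fc F q - \<i> * vfun q)" by (simp add: Gf_def[abs_def])
  have "dv Gf x = dv (Fc F) x - \<i>"
    unfolding G using op_diff[OF U isop_D SS_Fc SS.mult[OF SS.const sv] x] op_mult[OF U isop_D SS.const sv x]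
      op_const[OF U isop_D] vfun_ops by simp
  then have "Im (dv Gf x) = -1" using dvFc[OF x] by simp
  then show False using e by simp
qed

lemma INT: "x \<in> U \<Longrightarrow> QL1 qa2 x = QL2 qa1 x"
proof -
  assume x: "x \<in> U"
  have "QL1 (QL2 Gf) x = 0" by (rule op_zero[OF U isop_L1 x]) (use LG in auto)
  moreover have "QL2 (QL1 Gf) x = 0" by (rule op_zero[OF U isop_L2 x]) (use LG in auto)
  ultimately have "(QL1 qa2 x - QL2 qa1 x) * dv Gf x = 0" using comm_L1_L2[OF SS_G x] by simp
  then show ?thesis using DG_nz[OF x] by simp
qed

lemma INTb: "x \<in> U \<Longrightarrow> QLb1 qb2 x = QLb2 qb1 x"
proof -
  assume x: "x \<in> U"
  have "cnj (QL1 qa2 x) = cnj (QL2 qa1 x)" using INT[OF x] by simp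
  then show ?thesis using cnj_L1[OF diffU[OF SS_A2 x]] cnj_L2[OF diffU[OF SS_A1 x]] by simp
qed

lemma cm12: "SS U g \<Longrightarrow> x \<in> U \<Longrightarrow> QL1 (QL2 g) x = QL2 (QL1 g) x"
  using comm_L1_L2 INT by fastforce
lemma cmb12: "SS U g \<Longrightarrow> x \<in> U \<Longrightarrow> QLb1 (QLb2 g) x = QLb2 (QLb1 g) x"
  using comm_Lb1_Lb2 INTb by fastforce
lemma cm11b: "SS U g \<Longrightarrow> x \<in> U \<Longrightarrow> QL1 (QLb1 g) x - QLb1 (QL1 g) x = - \<i> * ql x * dv g x"
  using comm_L1_Lb1 H11 by simp
lemma cm21b: "SS U g \<Longrightarrow> x \<in> U \<Longrightarrow> QL2 (QLb1 g) x - QLb1 (QL2 g) x = \<i> * qk x * ql x * dv g x"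
  using comm_L2_Lb1 H21 by simp
lemma cm12b: "SS U g \<Longrightarrow> x \<in> U \<Longrightarrow> QL1 (QLb2 g) x - QLb2 (QL1 g) x = \<i> * qkb x * ql x * dv g x"
  using comm_L1_Lb2 H12 by simp
lemma cm22b: "SS U g \<Longrightarrow> x \<in> U \<Longrightarrow> QL2 (QLb2 g) x - QLb2 (QL2 g) x = - \<i> * qk x * qkb x * ql x * dv g x"
  using comm_L2_Lb2 H22 by simp

end

context CR begin

lemmas opadd = op_add[OF U isop_L1] op_add[OF U isop_L2] op_add[OF U isop_Lb1] op_add[OF U isop_Lb2]
  op_add[OF U isop_D] op_add[OF U isop_K] op_add[OF U isop_Kb] op_add[OF U isop_T]
lemmas opdiff = op_diff[OF U isop_L1] op_diff[OF U isop_L2] op_diff[OF U isop_Lb1] op_diff[OF U isop_Lb2]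
  op_diff[OF U isop_D] op_diff[OF U isop_K] op_diff[OF U isop_Kb] op_diff[OF U isop_T]
lemmas opmult = op_mult[OF U isop_L1] op_mult[OF U isop_L2] op_mult[OF U isop_Lb1] op_mult[OF U isop_Lb2]
  op_mult[OF U isop_D] op_mult[OF U isop_K] op_mult[OF U isop_Kb] op_mult[OF U isop_T]
lemmas opconst = op_const[OF U isop_L1] op_const[OF U isop_L2] op_const[OF U isop_Lb1] op_const[OF U isop_Lb2]
  op_const[OF U isop_D] op_const[OF U isop_K] op_const[OF U isop_Kb] op_const[OF U isop_T]
lemma op_minus: "isop U Op \<Longrightarrow> SS U f \<Longrightarrow> x \<in> U \<Longrightarrow> Op (\<lambda>y. - f y) x = - Op f x"
proof -
  assume a: "isop U Op" "SS U f" "x \<in> U"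
  have "(\<lambda>y. - f y) = (\<lambda>y. (-1) * f y)" by simp
  then show ?thesis using op_mult[OF U a(1) SS.const a(2) a(3), of "-1"] op_const[OF U a(1)] by simp
qed
lemmas opminus = op_minus[OF isop_L1] op_minus[OF isop_L2] op_minus[OF isop_Lb1] op_minus[OF isop_Lb2]
  op_minus[OF isop_D] op_minus[OF isop_K] op_minus[OF isop_Kb] op_minus[OF isop_T]
lemmas SSs = SSb SSop SS.mult SS.add SS_diff' SS.const SS.cnj SS_minus
lemmas opr = opadd opdiff opmult opconst opminus

lemma I1: "x \<in> U \<Longrightarrow> QK ql x = ql x * (qk x * dv qa1 x + dv qa2 x - QL1 qk x)"
proof -
  assume x: "x \<in> U"
  define h21 where "h21 = (\<lambda>y. QL2 qb1 y - QLb1 qa2 y)"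
  define h11 where "h11 = (\<lambda>y. QL1 qb1 y - QLb1 qa1 y)"
  have s: "SS U h21" "SS U h11" unfolding h21_def h11_def by (simp_all add: SSs)
  have J: "QL1 h21 x - QL2 h11 x = \<i> * ql x * dv qa2 x + \<i> * qk x * ql x * dv qa1 x"
  proof -
    have a: "QL1 h21 x = QL1 (QL2 qb1) x - QL1 (QLb1 qa2) x" unfolding h21_def using x by (simp add: opr SSs)
    have b: "QL2 h11 x = QL2 (QL1 qb1) x - QL2 (QLb1 qa1) x" unfolding h11_def using x by (simp add: opr SSs)
    have c: "QL1 (QL2 qb1) x = QL2 (QL1 qb1) x" by (rule cm12[OF SS_B1 x])
    have d: "QL1 (QLb1 qa2) x - QLb1 (QL1 qa2) x = - \<i> * ql x * dv qa2 x" by (rule cm11b[OF SS_A2 x])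
    have e: "QL2 (QLb1 qa1) x - QLb1 (QL2 qa1) x = \<i> * qk x * ql x * dv qa1 x" by (rule cm21b[OF SS_A1 x])
    have f: "QLb1 (QL1 qa2) x = QLb1 (QL2 qa1) x"
      by (rule op_transfer[OF U isop_Lb1 _ x]) (use INT SSs in auto)
    show ?thesis unfolding a b using c d e f by (simp add: algebra_simps)
  qed
  have a: "QL1 h21 x = QL1 (\<lambda>y. \<i> * qk y * ql y) x"
    by (rule op_transfer[OF U isop_L1 s(1) x]) (simp add: h21_def H21)
  have b: "QL2 h11 x = QL2 (\<lambda>y. - \<i> * ql y) x"
    by (rule op_transfer[OF U isop_L2 s(2) x]) (simp add: h11_def H11)
  have a': "QL1 h21 x = \<i> * (qk x * QL1 ql x + ql x * QL1 qk x)"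
    unfolding a using x by (simp add: opr SSs algebra_simps)
  have b': "QL2 h11 x = - \<i> * QL2 ql x"
    unfolding b using x by (simp add: opr SSs)
  have "\<i> * (qk x * QL1 ql x + ql x * QL1 qk x + QL2 ql x) = \<i> * (ql x * dv qa2 x + qk x * ql x * dv qa1 x)"
    using J unfolding a' b' by (simp add: algebra_simps)
  then have "qk x * QL1 ql x + ql x * QL1 qk x + QL2 ql x = ql x * dv qa2 x + qk x * ql x * dv qa1 x"
    by simp
  then show ?thesis unfolding Kop_def by (simp add: algebra_simps)
qed


lemma I3: "x \<in> U \<Longrightarrow> QKb qk x = 0"
proof -
  assume x: "x \<in> U"
  define h11 where "h11 = (\<lambda>y. QL1 qb1 y - QLb1 qa1 y)"
  define h12 where "h12 = (\<lambda>y. QL1 qb2 y - QLb2 qa1 y)"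
  define h21 where "h21 = (\<lambda>y. QL2 qb1 y - QLb1 qa2 y)"
  define h22 where "h22 = (\<lambda>y. QL2 qb2 y - QLb2 qa2 y)"
  have s: "SS U h11" "SS U h12" "SS U h21" "SS U h22" unfolding h11_def h12_def h21_def h22_def
    by (simp_all add: SSs)
  have J1: "QLb2 h11 x - QLb1 h12 x = - \<i> * ql x * dv qb2 x - \<i> * qkb x * ql x * dv qb1 x"
  proof -
    have a: "QLb2 h11 x = QLb2 (QL1 qb1) x - QLb2 (QLb1 qa1) x" unfolding h11_def using x by (simp add: opr SSs)
    have b: "QLb1 h12 x = QLb1 (QL1 qb2) x - QLb1 (QLb2 qa1) x" unfolding h12_def using x by (simp add: opr SSs)
    have c: "QLb1 (QLb2 qa1) x = QLb2 (QLb1 qa1) x" by (rule cmb12[OF SS_A1 x])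
    have d: "QL1 (QLb2 qb1) x - QLb2 (QL1 qb1) x = \<i> * qkb x * ql x * dv qb1 x" by (rule cm12b[OF SS_B1 x])
    have e: "QL1 (QLb1 qb2) x - QLb1 (QL1 qb2) x = - \<i> * ql x * dv qb2 x" by (rule cm11b[OF SS_B2 x])
    have f: "QL1 (QLb2 qb1) x = QL1 (QLb1 qb2) x"
      by (rule op_transfer[OF U isop_L1 _ x]) (use INTb SSs in auto)
    show ?thesis unfolding a b using c d e f by (simp add: algebra_simps)
  qed
  have J2: "QLb2 h21 x - QLb1 h22 x = \<i> * qk x * ql x * dv qb2 x + \<i> * qk x * qkb x * ql x * dv qb1 x"
  proof -
    have a: "QLb2 h21 x = QLb2 (QL2 qb1) x - QLb2 (QLb1 qa2) x" unfolding h21_def using x by (simp add: opr SSs)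
    have b: "QLb1 h22 x = QLb1 (QL2 qb2) x - QLb1 (QLb2 qa2) x" unfolding h22_def using x by (simp add: opr SSs)
    have c: "QLb1 (QLb2 qa2) x = QLb2 (QLb1 qa2) x" by (rule cmb12[OF SS_A2 x])
    have d: "QL2 (QLb2 qb1) x - QLb2 (QL2 qb1) x = - \<i> * qk x * qkb x * ql x * dv qb1 x" by (rule cm22b[OF SS_B1 x])
    have e: "QL2 (QLb1 qb2) x - QLb1 (QL2 qb2) x = \<i> * qk x * ql x * dv qb2 x" by (rule cm21b[OF SS_B2 x])
    have f: "QL2 (QLb2 qb1) x = QL2 (QLb1 qb2) x"
      by (rule op_transfer[OF U isop_L2 _ x]) (use INTb SSs in auto)
    show ?thesis unfolding a b using c d e f by (simp add: algebra_simps)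
  qed
  have t11: "QLb2 h11 x = - \<i> * QLb2 ql x"
  proof -
    have "QLb2 h11 x = QLb2 (\<lambda>y. - \<i> * ql y) x"
      by (rule op_transfer[OF U isop_Lb2 s(1) x]) (simp add: h11_def H11)
    then show ?thesis using x by (simp add: opr SSs)
  qed
  have t12: "QLb1 h12 x = \<i> * (qkb x * QLb1 ql x + ql x * QLb1 qkb x)"
  proof -
    have "QLb1 h12 x = QLb1 (\<lambda>y. \<i> * qkb y * ql y) x"
      by (rule op_transfer[OF U isop_Lb1 s(2) x]) (simp add: h12_def H12)
    then show ?thesis using x by (simp add: opr SSs algebra_simps)
  qed
  have t21: "QLb2 h21 x = \<i> * (qk x * QLb2 ql x + ql x * QLb2 qk x)"
  proof -
    have "QLb2 h21 x = QLb2 (\<lambda>y. \<i> * qk y * ql y) x"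
      by (rule op_transfer[OF U isop_Lb2 s(3) x]) (simp add: h21_def H21)
    then show ?thesis using x by (simp add: opr SSs algebra_simps)
  qed
  have t22: "QLb1 h22 x = - \<i> * (qk x * qkb x * QLb1 ql x + qk x * ql x * QLb1 qkb x + qkb x * ql x * QLb1 qk x)"
  proof -
    have "QLb1 h22 x = QLb1 (\<lambda>y. - \<i> * qk y * qkb y * ql y) x"
      by (rule op_transfer[OF U isop_Lb1 s(4) x]) (simp add: h22_def H22)
    then show ?thesis using x by (simp add: opr SSs algebra_simps)
  qed
  have E: "(QLb2 h21 x - QLb1 h22 x) + qk x * (QLb2 h11 x - QLb1 h12 x) =
      (\<i> * qk x * ql x * dv qb2 x + \<i> * qk x * qkb x * ql x * dv qb1 x)
      + qk x * (- \<i> * ql x * dv qb2 x - \<i> * qkb x * ql x * dv qb1 x)"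
    unfolding J1 J2 ..
  have R: "(QLb2 h21 x - QLb1 h22 x) + qk x * (QLb2 h11 x - QLb1 h12 x) -
      ((\<i> * qk x * ql x * dv qb2 x + \<i> * qk x * qkb x * ql x * dv qb1 x)
      + qk x * (- \<i> * ql x * dv qb2 x - \<i> * qkb x * ql x * dv qb1 x))
      = \<i> * ql x * (qkb x * QLb1 qk x + QLb2 qk x)"
    unfolding t11 t12 t21 t22 by (simp add: algebra_simps)
  have "\<i> * ql x * (qkb x * QLb1 qk x + QLb2 qk x) = 0"
    using E R by simp
  then show ?thesis unfolding Kbop_def using ellnz[OF x] by simp
qed


lemma I3f: "x \<in> U \<Longrightarrow> QLb2 qk x = - (qkb x * QLb1 qk x)"
  using I3[of x] unfolding Kbop_def by (simp add: eq_neg_iff_add_eq_0 add.commute)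

lemma I2: "x \<in> U \<Longrightarrow> QKb (QLb1 qk) x = - (QLb1 qk x * QLb1 qkb x)"
proof -
  assume x: "x \<in> U"
  have a: "QLb2 (QLb1 qk) x = QLb1 (QLb2 qk) x" using cmb12[OF SS_kk x] by simp
  have b: "QLb1 (QLb2 qk) x = QLb1 (\<lambda>y. - (qkb y * QLb1 qk y)) x"
    by (rule op_transfer[OF U isop_Lb1 _ x]) (use I3f SSs in auto)
  have c: "QLb1 (\<lambda>y. - (qkb y * QLb1 qk y)) x = - (qkb x * QLb1 (QLb1 qk) x + QLb1 qk x * QLb1 qkb x)"
    using x by (simp add: opr SSs)
  show ?thesis unfolding Kbop_def a b c by (simp add: algebra_simps)
qed

lemma PPf: "x \<in> U \<Longrightarrow> PP F x = QL1 ql x / ql x - dv qa1 x"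
  using ellnz[of x] by (simp add: PP_def L1op_def field_simps)

lemma PPbf: "x \<in> U \<Longrightarrow> cnj (PP F x) = QLb1 ql x / ql x - dv qb1 x"
proof -
  assume x: "x \<in> U"
  have "cnj (PP F x) = cnj (QL1 ql x) / cnj (ql x) - cnj (dv qa1 x)" using PPf[OF x] by simp
  also have "cnj (QL1 ql x) = QLb1 ql x"
    using cnj_L1[OF diffU[OF SS_ell x]] lreal_fun[OF isop_Lb1 x] by simp
  also have "cnj (dv qa1 x) = dv qb1 x" using cnj_D[OF diffU[OF SS_A1 x]] .
  finally show ?thesis using lreal[OF x] by simp
qed

lemma SS_PP: "SS U (PP F)"
proof -
  have "SS U (\<lambda>x. QL1 ql x / ql x - dv qa1 x)"
    by (intro SS_diff' SS_divide) (use ellnz SSs in auto)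
  then show ?thesis by (rule SS.eq) (simp add: PPf)
qed
lemma SS_PPb: "SS U (\<lambda>x. cnj (PP F x))" by (intro SS.cnj SS_PP)

lemma Kfun: "QK g = (\<lambda>y. qk y * QL1 g y + QL2 g y)" by (simp add: Kop_def[abs_def])

lemma cmK1: "SS U g \<Longrightarrow> x \<in> U \<Longrightarrow> QK (QL1 g) x - QL1 (QK g) x = - (QL1 qk x * QL1 g x)"
proof -
  assume g: "SS U g" and x: "x \<in> U"
  have "QL1 (QK g) x = qk x * QL1 (QL1 g) x + QL1 g x * QL1 qk x + QL1 (QL2 g) x"
    unfolding Kfun using x g by (simp add: opr SSs)
  moreover have "QK (QL1 g) x = qk x * QL1 (QL1 g) x + QL2 (QL1 g) x" by (simp add: Kop_def)
  ultimately show ?thesis using cm12[OF g x] by simp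
qed

lemma cmKb1: "SS U g \<Longrightarrow> x \<in> U \<Longrightarrow> QK (QLb1 g) x - QLb1 (QK g) x = - (QLb1 qk x * QL1 g x)"
proof -
  assume g: "SS U g" and x: "x \<in> U"
  have A: "QLb1 (QK g) x = qk x * QLb1 (QL1 g) x + QL1 g x * QLb1 qk x + QLb1 (QL2 g) x"
    unfolding Kfun using x g by (simp add: opr SSs)
  have B: "QK (QLb1 g) x = qk x * QL1 (QLb1 g) x + QL2 (QLb1 g) x" by (simp add: Kop_def)
  have e1: "QLb1 (QL1 g) x = QL1 (QLb1 g) x + \<i> * ql x * dv g x" using cm11b[OF g x] by (simp add: algebra_simps)
  have e2: "QL2 (QLb1 g) x = QLb1 (QL2 g) x + \<i> * qk x * ql x * dv g x" using cm21b[OF g x] by (simp add: algebra_simps)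
  show ?thesis unfolding A B e1 e2 by (simp add: algebra_simps)
qed


lemmas opdivide = op_divide[OF U isop_L1] op_divide[OF U isop_L2] op_divide[OF U isop_Lb1] op_divide[OF U isop_Lb2]
  op_divide[OF U isop_D] op_divide[OF U isop_K] op_divide[OF U isop_Kb] op_divide[OF U isop_T]

lemma I5: "x \<in> U \<Longrightarrow> QK (PP F) x = - QL1 (QL1 qk) x - PP F x * QL1 qk x"
proof -
  assume x: "x \<in> U"
  have l0: "ql x \<noteq> 0" using ellnz[OF x] .
  have s0: "QK (PP F) x = QK (\<lambda>y. QL1 ql y / ql y - dv qa1 y) x"
    by (rule op_transfer[OF U isop_K SS_PP x]) (simp add: PPf)
  have s1: "QK (\<lambda>y. QL1 ql y / ql y - dv qa1 y) x =
     (ql x * QK (QL1 ql) x - QL1 ql x * QK ql x) / (ql x * ql x) - QK (dv qa1) x"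
    using x l0 ellnz by (simp add: opdiff opdivide SSs SS_divide)
  have F1: "QK (QL1 ql) x = QL1 (QK ql) x - QL1 qk x * QL1 ql x" using cmK1[OF SS_ell x] by (simp add: algebra_simps)
  have F2a: "QL1 (QK ql) x = QL1 (\<lambda>y. ql y * (qk y * dv qa1 y + dv qa2 y - QL1 qk y)) x"
    by (rule op_transfer[OF U isop_L1 _ x]) (use I1 SSs in auto)
  have F2: "QL1 (\<lambda>y. ql y * (qk y * dv qa1 y + dv qa2 y - QL1 qk y)) x =
     ql x * (qk x * QL1 (dv qa1) x + dv qa1 x * QL1 qk x + QL1 (dv qa2) x - QL1 (QL1 qk) x)
     + (qk x * dv qa1 x + dv qa2 x - QL1 qk x) * QL1 ql x"
    using x by (simp add: opr SSs)
  have F3: "QK (dv qa1) x = qk x * QL1 (dv qa1) x + QL2 (dv qa1) x" by (simp add: Kop_def)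
  have F4: "QL1 (dv qa1) x = dv (QL1 qa1) x - dv qa1 x * dv qa1 x" using comm_L1_D[OF SS_A1 x] by (simp add: algebra_simps)
  have F5: "QL2 (dv qa1) x = dv (QL2 qa1) x - dv qa2 x * dv qa1 x" using comm_L2_D[OF SS_A1 x] by (simp add: algebra_simps)
  have F6: "QL1 (dv qa2) x = dv (QL1 qa2) x - dv qa1 x * dv qa2 x" using comm_L1_D[OF SS_A2 x] by (simp add: algebra_simps)
  have F7: "dv (QL2 qa1) x = dv (QL1 qa2) x"
    by (rule op_transfer[OF U isop_D _ x]) (use INT SSs in auto)
  have F8: "QK ql x = ql x * (qk x * dv qa1 x + dv qa2 x - QL1 qk x)" using I1[OF x] .
  show ?thesis
    unfolding s0 s1 F1 F2a F2 F3 F4 F5 F6 F7 F8 PPf[OF x] using l0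
    by (simp add: field_simps)
qed

lemma I6: "x \<in> U \<Longrightarrow> QK (\<lambda>y. cnj (PP F y)) x = - \<i> * Top F qk x - PP F x * QLb1 qk x - QLb1 (QL1 qk) x"
proof -
  assume x: "x \<in> U"
  have l0: "ql x \<noteq> 0" using ellnz[OF x] .
  have s0: "QK (\<lambda>y. cnj (PP F y)) x = QK (\<lambda>y. QLb1 ql y / ql y - dv qb1 y) x"
    by (rule op_transfer[OF U isop_K SS_PPb x]) (simp add: PPbf)
  have s1: "QK (\<lambda>y. QLb1 ql y / ql y - dv qb1 y) x =
     (ql x * QK (QLb1 ql) x - QLb1 ql x * QK ql x) / (ql x * ql x) - QK (dv qb1) x"
    using x l0 ellnz by (simp add: opdiff opdivide SSs SS_divide)
  have G1: "QK (QLb1 ql) x = QLb1 (QK ql) x - QLb1 qk x * QL1 ql x" using cmKb1[OF SS_ell x] by (simp add: algebra_simps)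
  have G2a: "QLb1 (QK ql) x = QLb1 (\<lambda>y. ql y * (qk y * dv qa1 y + dv qa2 y - QL1 qk y)) x"
    by (rule op_transfer[OF U isop_Lb1 _ x]) (use I1 SSs in auto)
  have G2: "QLb1 (\<lambda>y. ql y * (qk y * dv qa1 y + dv qa2 y - QL1 qk y)) x =
     ql x * (qk x * QLb1 (dv qa1) x + dv qa1 x * QLb1 qk x + QLb1 (dv qa2) x - QLb1 (QL1 qk) x)
     + (qk x * dv qa1 x + dv qa2 x - QL1 qk x) * QLb1 ql x"
    using x by (simp add: opr SSs)
  have G3: "QK (dv qb1) x = qk x * QL1 (dv qb1) x + QL2 (dv qb1) x" by (simp add: Kop_def)
  have G4: "QL1 (dv qb1) x = dv (QL1 qb1) x - dv qa1 x * dv qb1 x" using comm_L1_D[OF SS_B1 x] by (simp add: algebra_simps)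
  have G5: "QL2 (dv qb1) x = dv (QL2 qb1) x - dv qa2 x * dv qb1 x" using comm_L2_D[OF SS_B1 x] by (simp add: algebra_simps)
  have G6a: "dv (QL1 qb1) x = dv (\<lambda>y. QLb1 qa1 y - \<i> * ql y) x"
    by (rule op_transfer[OF U isop_D _ x]) (use H11 SSs in \<open>auto simp: algebra_simps\<close>)
  have G6: "dv (\<lambda>y. QLb1 qa1 y - \<i> * ql y) x = dv (QLb1 qa1) x - \<i> * dv ql x"
    using x by (simp add: opr SSs)
  have G7a: "dv (QL2 qb1) x = dv (\<lambda>y. QLb1 qa2 y + \<i> * qk y * ql y) x"
    by (rule op_transfer[OF U isop_D _ x]) (use H21 SSs in \<open>auto simp: algebra_simps\<close>)
  have G7: "dv (\<lambda>y. QLb1 qa2 y + \<i> * qk y * ql y) x = dv (QLb1 qa2) x + \<i> * (qk x * dv ql x + ql x * dv qk x)"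
    using x by (simp add: opr SSs algebra_simps)
  have G8: "dv (QLb1 qa1) x = QLb1 (dv qa1) x + dv qb1 x * dv qa1 x" using comm_Lb1_D[OF SS_A1 x] by (simp add: algebra_simps)
  have G9: "dv (QLb1 qa2) x = QLb1 (dv qa2) x + dv qb1 x * dv qa2 x" using comm_Lb1_D[OF SS_A2 x] by (simp add: algebra_simps)
  have F8: "QK ql x = ql x * (qk x * dv qa1 x + dv qa2 x - QL1 qk x)" using I1[OF x] .
  show ?thesis
    unfolding s0 s1 G1 G2a G2 G3 G4 G5 G6a G6 G7a G7 G8 G9 F8 PPf[OF x] Top_def using l0
    by (simp add: field_simps)
qed

end

context CR begin

lemma FL0:
  assumes g: "g differentiable (at x)"
  shows "dirD g X x = fz1 X * QL1 g x + fz2 X * QL2 g x + cnj (fz1 X) * QLb1 g x + cnj (fz2 X) * QLb2 g x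
     + (fv X - qa1 x * fz1 X - qa2 x * fz2 X - qb1 x * cnj (fz1 X) - qb2 x * cnj (fz2 X)) * dv g x"
proof -
  obtain z1 z2 t where X0: "X = (z1, z2, t)" by (cases X) auto
  define r1 where "r1 = Re z1"
  define s1 where "s1 = Im z1"
  define r2 where "r2 = Re z2"
  define s2 where "s2 = Im z2"
  have X: "X = (complex_of_real r1 + \<i> * complex_of_real s1, complex_of_real r2 + \<i> * complex_of_real s2, t)"
    unfolding X0 r1_def s1_def r2_def s2_def by (simp add: complex_eq_iff)
  have dec: "X = r1 *\<^sub>R (1,0,0) + s1 *\<^sub>R (\<i>,0,0) + r2 *\<^sub>R (0,1,0) + s2 *\<^sub>R (0,\<i>,0) + t *\<^sub>R (0,0,1)"
    unfolding X by (simp add: complex_eq_iff)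
  have "dirD g X x = r1 *\<^sub>R dx1 g x + s1 *\<^sub>R dy1 g x + r2 *\<^sub>R dx2 g x + s2 *\<^sub>R dy2 g x + t *\<^sub>R dv g x"
    unfolding dx1_def dy1_def dx2_def dy2_def dv_def by (subst dec) (simp only: dirD_lin[OF g])
  also have "\<dots> = fz1 X * QL1 g x + fz2 X * QL2 g x + cnj (fz1 X) * QLb1 g x + cnj (fz2 X) * QLb2 g x
     + (fv X - qa1 x * fz1 X - qa2 x * fz2 X - qb1 x * cnj (fz1 X) - qb2 x * cnj (fz2 X)) * dv g x"
    unfolding X fz1_def fz2_def fv_def fst_conv snd_conv
    by (simp add: L1op_def L2op_def Lb1op_def Lb2op_def dz1_def dz2_def dzb1_def dzb2_def scaleR_conv_of_real
          algebra_simps diff_divide_distrib add_divide_distrib)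
  finally show ?thesis .
qed

lemma FL:
  assumes g: "SS U g" and x: "x \<in> U"
  shows "dirD g X x = fz1 X * QL1 g x + fz2 X * QL2 g x + cnj (fz1 X) * QLb1 g x + cnj (fz2 X) * QLb2 g x
     + ql x * rho0 F x X * dv g x"
  using FL0[OF diffU[OF g x]] ellnz[OF x] by (simp add: rho0_def)


lemma SS_rhoY: "SS U (\<lambda>q. rho0 F q Y)"
proof -
  have "SS U (\<lambda>q. (fv Y - qa1 q * fz1 Y - qa2 q * fz2 Y - qb1 q * cnj (fz1 Y) - qb2 q * cnj (fz2 Y)) / ql q)"
    by (intro SS_divide SS_diff' SS.mult SS.const SSb) (use ellnz in auto)
  then show ?thesis by (rule SS.eq) (simp add: rho0_def)
qed

lemma op_rho:
  assumes o: "isop U Op" and x: "x \<in> U"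
  shows "Op (\<lambda>q. rho0 F q Y) x = ((- (Op qa1 x * fz1 Y + Op qa2 x * fz2 Y + Op qb1 x * cnj (fz1 Y) + Op qb2 x * cnj (fz2 Y))) - rho0 F x Y * Op ql x) / ql x"
proof -
  have l0: "ql x \<noteq> 0" using ellnz[OF x] .
  have e: "(\<lambda>q. rho0 F q Y) = (\<lambda>q. (fv Y - qa1 q * fz1 Y - qa2 q * fz2 Y - qb1 q * cnj (fz1 Y) - qb2 q * cnj (fz2 Y)) / ql q)"
    by (simp add: rho0_def[abs_def])
  have n: "Op (\<lambda>q. fv Y - qa1 q * fz1 Y - qa2 q * fz2 Y - qb1 q * cnj (fz1 Y) - qb2 q * cnj (fz2 Y)) x
     = - (Op qa1 x * fz1 Y + Op qa2 x * fz2 Y + Op qb1 x * cnj (fz1 Y) + Op qb2 x * cnj (fz2 Y))"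
    using x by (simp add: op_diff[OF U o] op_mult[OF U o] op_const[OF U o] SSs)
  show ?thesis unfolding e
    using x l0 by (simp add: op_divide[OF U o] SSs n) (simp add: rho0_def field_simps)
qed

lemma cnj_K: "g differentiable (at x) \<Longrightarrow> cnj (QK g x) = QKb (\<lambda>y. cnj (g y)) x"
  by (simp add: Kop_def Kbop_def cnj_L1 cnj_L2)

lemma cnj_L1k: "x \<in> U \<Longrightarrow> cnj (QL1 qk x) = QLb1 qkb x"
  using cnj_L1[OF diffU[OF SS_kk]] by simp
lemma cnj_m: "x \<in> U \<Longrightarrow> cnj (QLb1 qk x) = QL1 qkb x"
  using cnj_Lb1[OF diffU[OF SS_kk]] by simp
lemma cnj_n: "x \<in> U \<Longrightarrow> cnj (QLb1 (QLb1 qk) x) = QL1 (QL1 qkb) x"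
proof -
  assume x: "x \<in> U"
  have "cnj (QLb1 (QLb1 qk) x) = QL1 (\<lambda>y. cnj (QLb1 qk y)) x"
    using cnj_Lb1[OF diffU[OF SSop(3)[OF SS_kk] x]] .
  also have "\<dots> = QL1 (QL1 qkb) x"
    by (rule op_transfer[OF U isop_L1 _ x]) (auto simp: SSs cnj_m)
  finally show ?thesis .
qed
lemma cnj_L1L1k: "x \<in> U \<Longrightarrow> cnj (QL1 (QL1 qk) x) = QLb1 (QLb1 qkb) x"
proof -
  assume x: "x \<in> U"
  have "cnj (QL1 (QL1 qk) x) = QLb1 (\<lambda>y. cnj (QL1 qk y)) x"
    using cnj_L1[OF diffU[OF SSop(1)[OF SS_kk] x]] .
  also have "\<dots> = QLb1 (QLb1 qkb) x"
    by (rule op_transfer[OF U isop_Lb1 _ x]) (auto simp: SSs cnj_L1k)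
  finally show ?thesis .
qed
lemma rho_real: "x \<in> U \<Longrightarrow> cnj (rho0 F x X) = rho0 F x X"
  using lreal[of x] by (simp add: rho0_def fv_def algebra_simps)

lemma I1b: "x \<in> U \<Longrightarrow> QKb ql x = ql x * (qkb x * dv qb1 x + dv qb2 x - QLb1 qkb x)"
proof -
  assume x: "x \<in> U"
  have "cnj (QK ql x) = QKb ql x"
    using cnj_K[OF diffU[OF SS_ell x]] lreal_fun[OF isop_Kb x] by simp
  moreover have "cnj (ql x * (qk x * dv qa1 x + dv qa2 x - QL1 qk x)) = ql x * (qkb x * dv qb1 x + dv qb2 x - QLb1 qkb x)"
    using lreal[OF x] cnj_D[OF diffU[OF SS_A1 x]] cnj_D[OF diffU[OF SS_A2 x]] cnj_L1k[OF x] by simp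
  ultimately show ?thesis using I1[OF x] by simp
qed

lemma SS_B0: "SS U (B0 F)"
proof -
  have "SS U (\<lambda>x. QLb1 (QLb1 qk) x / QLb1 qk x - cnj (PP F x))"
    by (intro SS_diff' SS_divide SSop SS_kk SS_PPb) (use mnz in auto)
  then show ?thesis by (rule SS.eq) (simp add: B0_def)
qed

lemma B0fun: "B0 F = (\<lambda>x. QLb1 (QLb1 qk) x / QLb1 qk x - cnj (PP F x))"
  by (simp add: B0_def[abs_def])

lemma cmKbb1: "SS U g \<Longrightarrow> x \<in> U \<Longrightarrow> QKb (QLb1 g) x - QLb1 (QKb g) x = - (QLb1 qkb x * QLb1 g x)"
proof -
  assume g: "SS U g" and x: "x \<in> U"
  have Kbfun: "QKb g = (\<lambda>y. qkb y * QLb1 g y + QLb2 g y)" by (simp add: Kbop_def[abs_def])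
  have A: "QLb1 (QKb g) x = qkb x * QLb1 (QLb1 g) x + QLb1 g x * QLb1 qkb x + QLb1 (QLb2 g) x"
    unfolding Kbfun using x g by (simp add: opr SSs)
  have B: "QKb (QLb1 g) x = qkb x * QLb1 (QLb1 g) x + QLb2 (QLb1 g) x" by (simp add: Kbop_def)
  show ?thesis unfolding A B using cmb12[OF g x] by (simp add: algebra_simps)
qed

lemma I4: "x \<in> U \<Longrightarrow> QKb (B0 F) x = - (QLb1 qkb x * B0 F x)"
proof -
  assume x: "x \<in> U"
  have m0: "QLb1 qk x \<noteq> 0" using mnz[OF x] .
  have a: "QKb (B0 F) x = (QLb1 qk x * QKb (QLb1 (QLb1 qk)) x - QLb1 (QLb1 qk) x * QKb (QLb1 qk) x) / (QLb1 qk x * QLb1 qk x)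
      - QKb (\<lambda>y. cnj (PP F y)) x"
    unfolding B0fun using x m0 mnz by (simp add: opdiff opdivide SSs SS_divide SS_PPb)
  have b: "QKb (QLb1 qk) x = - (QLb1 qk x * QLb1 qkb x)" by (rule I2[OF x])
  have c: "QKb (QLb1 (QLb1 qk)) x = QLb1 (QKb (QLb1 qk)) x - QLb1 qkb x * QLb1 (QLb1 qk) x"
    using cmKbb1[OF SSop(3)[OF SS_kk] x] by (simp add: algebra_simps)
  have d: "QLb1 (QKb (QLb1 qk)) x = QLb1 (\<lambda>y. - (QLb1 qk y * QLb1 qkb y)) x"
    by (rule op_transfer[OF U isop_Lb1 _ x]) (auto simp: SSs I2)
  have e: "QLb1 (\<lambda>y. - (QLb1 qk y * QLb1 qkb y)) x = - (QLb1 qk x * QLb1 (QLb1 qkb) x + QLb1 qkb x * QLb1 (QLb1 qk) x)"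
    using x by (simp add: opr SSs)
  have f: "QKb (\<lambda>y. cnj (PP F y)) x = - QLb1 (QLb1 qkb) x - cnj (PP F x) * QLb1 qkb x"
  proof -
    have "QKb (\<lambda>y. cnj (PP F y)) x = cnj (QK (PP F) x)" using cnj_K[OF diffU[OF SS_PP x]] by simp
    also have "\<dots> = - QLb1 (QLb1 qkb) x - cnj (PP F x) * QLb1 qkb x"
      using I5[OF x] cnj_L1L1k[OF x] cnj_L1k[OF x] by simp
    finally show ?thesis .
  qed
  show ?thesis unfolding a b c d e f B0_def using m0 by (simp add: field_simps)
qed

lemma DZET: "x \<in> U \<Longrightarrow> extd (zeta0 F) x X Y = dirD (QLb1 qk) X x * fz2 Y - dirD (QLb1 qk) Y x * fz2 X"
proof -
  assume x: "x \<in> U"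
  have d: "QLb1 qk differentiable (at x)" using diffU[OF SSop(3)[OF SS_kk] x] .
  have "(\<lambda>q. zeta0 F q Y) = (\<lambda>q. QLb1 qk q * fz2 Y)" "(\<lambda>q. zeta0 F q X) = (\<lambda>q. QLb1 qk q * fz2 X)"
    by (simp_all add: zeta0_def[abs_def])
  then show ?thesis unfolding extd_def using d by (simp add: dirD_mult)
qed

lemma DKAP: "x \<in> U \<Longrightarrow> extd (kappa0 F) x X Y = - (dirD qk X x * fz2 Y - dirD qk Y x * fz2 X)
   + \<i> / 3 * (dirD (B0 F) X x * rho0 F x Y - dirD (B0 F) Y x * rho0 F x X) + \<i> / 3 * B0 F x * extd (rho0 F) x X Y"
proof -
  assume x: "x \<in> U"
  have dk: "qk differentiable (at x)" using diffU[OF SS_kk x] .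
  have dB: "B0 F differentiable (at x)" using diffU[OF SS_B0 x] .
  have dr: "(\<lambda>q. rho0 F q Z) differentiable (at x)" for Z using diffU[OF SS_rhoY x] .
  have dm: "(\<lambda>q. \<i> / 3 * B0 F q) differentiable (at x)" using dB by (intro differentiable_mult) auto
  have dd: "(\<lambda>q. fz1 Z - qk q * fz2 Z) differentiable (at x)" for Z using dk by (intro differentiable_diff differentiable_mult) auto
  have e: "(\<lambda>q. kappa0 F q Z) = (\<lambda>q. (fz1 Z - qk q * fz2 Z) + (\<i> / 3 * B0 F q) * rho0 F q Z)" for Z
    by (simp add: kappa0_def[abs_def] mult.assoc)
  have D1: "dirD (\<lambda>q. kappa0 F q Z) W x = - (dirD qk W x * fz2 Z) + \<i> / 3 * (B0 F x * dirD (\<lambda>q. rho0 F q Z) W x + dirD (B0 F) W x * rho0 F x Z)" for Z W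
  proof -
    have "dirD (\<lambda>q. kappa0 F q Z) W x = dirD (\<lambda>q. fz1 Z - qk q * fz2 Z) W x + dirD (\<lambda>q. (\<i> / 3 * B0 F q) * rho0 F q Z) W x"
      unfolding e by (rule dirD_add[OF dd differentiable_mult[OF dm dr]])
    also have "dirD (\<lambda>q. fz1 Z - qk q * fz2 Z) W x = - (dirD qk W x * fz2 Z)"
      using dk by (simp add: dirD_diff dirD_mult)
    also have "dirD (\<lambda>q. (\<i> / 3 * B0 F q) * rho0 F q Z) W x = \<i> / 3 * B0 F x * dirD (\<lambda>q. rho0 F q Z) W x + dirD (\<lambda>q. \<i> / 3 * B0 F q) W x * rho0 F x Z"
      using dm dr by (rule dirD_mult)
    also have "dirD (\<lambda>q. \<i> / 3 * B0 F q) W x = \<i> / 3 * dirD (B0 F) W x"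
    proof -
      have "dirD (\<lambda>q. \<i> / 3 * B0 F q) W x = \<i> / 3 * dirD (B0 F) W x + dirD (\<lambda>q. \<i> / 3) W x * B0 F x"
        by (rule dirD_mult[OF differentiable_const dB])
      then show ?thesis by (simp only: dirD_const) simp
    qed
    finally show ?thesis by (simp add: algebra_simps)
  qed
  show ?thesis unfolding extd_def D1 by (simp add: algebra_simps)
qed

end

definition DRF :: "complex \<Rightarrow> complex \<Rightarrow> complex \<Rightarrow> complex \<Rightarrow> complex \<Rightarrow> complex \<Rightarrow> complex \<Rightarrow> complex \<Rightarrow> complex \<Rightarrow> complex \<Rightarrow> complex \<Rightarrow> complex \<Rightarrow> complex \<Rightarrow> complex \<Rightarrow> complex \<Rightarrow> complex \<Rightarrow> complex" where
  "DRF z1 z2 w1 w2 rX z1y z2y w1y w2y rY k kb P Pb L1k M1kb = \<i> * ((z1 - k * z2) * (w1y - kb * w2y) - (z1y - k * z2y) * (w1 - kb * w2)) + (rX * (P * (z1y - k * z2y) - L1k * z2y + Pb * (w1y - kb * w2y) - M1kb * w2y) - rY * (P * (z1 - k * z2) - L1k * z2 + Pb * (w1 - kb * w2) - M1kb * w2))"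

definition EL1B0 :: "complex \<Rightarrow> complex \<Rightarrow> complex \<Rightarrow> complex \<Rightarrow> complex \<Rightarrow> complex" where
  "EL1B0 m n L1n L1m L1Pb = (m * L1n - n * L1m) / (m * m) - L1Pb"
definition EM1B0 :: "complex \<Rightarrow> complex \<Rightarrow> complex \<Rightarrow> complex \<Rightarrow> complex" where
  "EM1B0 m n M1n M1Pb = (m * M1n - n * n) / (m * m) - M1Pb"
definition EL2B0 :: "complex \<Rightarrow> complex \<Rightarrow> complex \<Rightarrow> complex \<Rightarrow> complex \<Rightarrow> complex \<Rightarrow> complex \<Rightarrow> complex \<Rightarrow> complex \<Rightarrow> complex \<Rightarrow> complex \<Rightarrow> complex" where
  "EL2B0 m n Kn Km Tk P M1L1k k L1n L1m L1Pb = (m * Kn - n * Km) / (m * m) - (- \<i> * Tk - P * m - M1L1k) - k * EL1B0 m n L1n L1m L1Pb"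
definition EM2B0 :: "complex \<Rightarrow> complex \<Rightarrow> complex \<Rightarrow> complex \<Rightarrow> complex \<Rightarrow> complex \<Rightarrow> complex \<Rightarrow> complex" where
  "EM2B0 m n Pb M1kb kb M1n M1Pb = - (M1kb * (n / m - Pb)) - kb * EM1B0 m n M1n M1Pb"

lemma alg_drho:
  fixes z1 z2 w1 w2 rX z1y z2y w1y w2y rY l k kb P Pb L1k M1kb L1a1 L1a2 L1b1 L1b2 L1l L2a1 L2a2 L2b1 L2b2 L2l M1a1 M1a2 M1b1 M1b2 M1l M2a1 M2a2 M2b1 M2b2 M2l Da1 Da2 Db1 Db2 Dl :: complex
  assumes l0: "l \<noteq> 0"
    and hs: "L1a2 = L2a1" "M1b2 = M2b1" "L1b1 - M1a1 = - \<i> * l" "L2b1 - M1a2 = \<i> * k * l" "L1b2 - M2a1 = \<i> * kb * l" "L2b2 - M2a2 = - \<i> * k * kb * l" "k * L1l + L2l = l * (k * Da1 + Da2 - L1k)" "kb * M1l + M2l = l * (kb * Db1 + Db2 - M1kb)" "P = L1l / l - Da1" "Pb = M1l / l - Db1"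
  shows "(z1 * (((- (L1a1 * z1y + L1a2 * z2y + L1b1 * w1y + L1b2 * w2y)) - rY * L1l) / l) + z2 * (((- (L2a1 * z1y + L2a2 * z2y + L2b1 * w1y + L2b2 * w2y)) - rY * L2l) / l) + w1 * (((- (M1a1 * z1y + M1a2 * z2y + M1b1 * w1y + M1b2 * w2y)) - rY * M1l) / l) + w2 * (((- (M2a1 * z1y + M2a2 * z2y + M2b1 * w1y + M2b2 * w2y)) - rY * M2l) / l) + l * rX * (((- (Da1 * z1y + Da2 * z2y + Db1 * w1y + Db2 * w2y)) - rY * Dl) / l)) - (z1y * (((- (L1a1 * z1 + L1a2 * z2 + L1b1 * w1 + L1b2 * w2)) - rX * L1l) / l) + z2y * (((- (L2a1 * z1 + L2a2 * z2 + L2b1 * w1 + L2b2 * w2)) - rX * L2l) / l) + w1y * (((- (M1a1 * z1 + M1a2 * z2 + M1b1 * w1 + M1b2 * w2)) - rX * M1l) / l) + w2y * (((- (M2a1 * z1 + M2a2 * z2 + M2b1 * w1 + M2b2 * w2)) - rX * M2l) / l) + l * rY * (((- (Da1 * z1 + Da2 * z2 + Db1 * w1 + Db2 * w2)) - rX * Dl) / l)) = DRF z1 z2 w1 w2 rX z1y z2y w1y w2y rY k kb P Pb L1k M1kb"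
proof -
  have s: "L2a1 = L1a2" "M2b1 = M1b2" "L1b1 = M1a1 - \<i> * l" "L2b1 = M1a2 + \<i> * k * l"
    "L1b2 = M2a1 + \<i> * kb * l" "L2b2 = M2a2 - \<i> * k * kb * l"
    "L2l = l * (k * Da1 + Da2 - L1k) - k * L1l" "M2l = l * (kb * Db1 + Db2 - M1kb) - kb * M1l"
    using hs(1-8) by (simp_all add: algebra_simps)
  show ?thesis unfolding DRF_def s hs(9,10) using l0 by (simp add: field_simps)
qed

lemma alg_rho:
  fixes z1 z2 w1 w2 rX z1y z2y w1y w2y rY k kb m mb n nb P Pb L1k M1kb l k_X k_Y kb_X kb_Y z_X z_Y zb_X zb_Y Erho :: complex
  assumes nz: "l \<noteq> 0" "m \<noteq> 0" "mb \<noteq> 0"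
    and fh: "k_X = z1 - k * z2 + \<i> / 3 * (n / m - Pb) * rX" "kb_X = w1 - kb * w2 - \<i> / 3 * (nb / mb - P) * rX" "z_X = m * z2" "zb_X = mb * w2" "k_Y = z1y - k * z2y + \<i> / 3 * (n / m - Pb) * rY" "kb_Y = w1y - kb * w2y - \<i> / 3 * (nb / mb - P) * rY" "z_Y = m * z2y" "zb_Y = mb * w2y"
    and eh: "Erho = DRF z1 z2 w1 w2 rX z1y z2y w1y w2y rY k kb P Pb L1k M1kb"
  shows "Erho =
      (1/3 * nb / mb + 2/3 * P) * (rX * k_Y - rY * k_X)
    - L1k / m * (rX * z_Y - rY * z_X)
    + (1/3 * n / m + 2/3 * Pb) * (rX * kb_Y - rY * kb_X)
    - M1kb / mb * (rX * zb_Y - rY * zb_X)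
    + \<i> * (k_X * kb_Y - k_Y * kb_X)"
  unfolding fh eh DRF_def using nz by (simp add: field_simps power2_eq_square power3_eq_cube)

lemma alg_kap:
  fixes z1 z2 w1 w2 rX z1y z2y w1y w2y rY k kb m mb n nb P Pb L1k M1kb l k_X k_Y kb_X kb_Y z_X z_Y zb_X zb_Y Ekap L2k Dk L1n L1m L1Pb M1n M1Pb Kn Km M1L1k Tk DB0 :: complex
  assumes nz: "l \<noteq> 0" "m \<noteq> 0" "mb \<noteq> 0"
    and fh: "k_X = z1 - k * z2 + \<i> / 3 * (n / m - Pb) * rX" "kb_X = w1 - kb * w2 - \<i> / 3 * (nb / mb - P) * rX" "z_X = m * z2" "zb_X = mb * w2" "k_Y = z1y - k * z2y + \<i> / 3 * (n / m - Pb) * rY" "kb_Y = w1y - kb * w2y - \<i> / 3 * (nb / mb - P) * rY" "z_Y = m * z2y" "zb_Y = mb * w2y"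
    and eh: "Ekap = - ((z1 * L1k + z2 * L2k + w1 * m - w2 * kb * m + l * rX * Dk) * z2y - (z1y * L1k + z2y * L2k + w1y * m - w2y * kb * m + l * rY * Dk) * z2) + \<i> / 3 * ((z1 * EL1B0 m n L1n L1m L1Pb + z2 * EL2B0 m n Kn Km Tk P M1L1k k L1n L1m L1Pb + w1 * EM1B0 m n M1n M1Pb + w2 * EM2B0 m n Pb M1kb kb M1n M1Pb + l * rX * DB0) * rY - (z1y * EL1B0 m n L1n L1m L1Pb + z2y * EL2B0 m n Kn Km Tk P M1L1k k L1n L1m L1Pb + w1y * EM1B0 m n M1n M1Pb + w2y * EM2B0 m n Pb M1kb kb M1n M1Pb + l * rY * DB0) * rX) + \<i> / 3 * (n / m - Pb) * DRF z1 z2 w1 w2 rX z1y z2y w1y w2y rY k kb P Pb L1k M1kb" "Tk = l * Dk"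
  shows "Ekap =
      (- \<i>/3 * L1n / m
       + \<i>/9 * nb * n / (mb * m)
       + \<i>/3 * L1m * n / (m)^2
       - \<i>/9 * nb / mb * Pb
       + 2*\<i>/9 * n / m * P
       + \<i>/3 * L1Pb
       - 2*\<i>/9 * P * Pb) * (rX * k_Y - rY * k_X)
    + (- \<i>/3 * Kn / (m)^2
       + \<i>/3 * Km * n / (m)^3
       - \<i>/3 * nb / mb
       - \<i>/3 * M1L1k / m
       - 2/3 * Tk / m) * (rX * z_Y - rY * z_X)
    + (- \<i>/3 * M1n / m
       + 4*\<i>/9 * (n)^2 / (m)^2
       + \<i>/9 * n / m * Pb
       + \<i>/3 * M1Pb
       - 2*\<i>/9 * Pb * Pb) * (rX * kb_Y - rY * kb_X)
    + 0 * (rX * zb_Y - rY * zb_X)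
    - L1k / m * (k_X * z_Y - k_Y * z_X)
    + (- 1/3 * n / m + 1/3 * Pb) * (k_X * kb_Y - k_Y * kb_X)
    + (z_X * kb_Y - z_Y * kb_X)"
  unfolding fh eh DRF_def EL1B0_def EM1B0_def EL2B0_def EM2B0_def using nz by (simp add: field_simps power2_eq_square power3_eq_cube)

lemma alg_zet:
  fixes z1 z2 w1 w2 rX z1y z2y w1y w2y rY k kb m mb n nb P Pb L1k M1kb l k_X k_Y kb_X kb_Y z_X z_Y zb_X zb_Y Ezet L2m Dm L1m Tm :: complex
  assumes nz: "l \<noteq> 0" "m \<noteq> 0" "mb \<noteq> 0"
    and fh: "k_X = z1 - k * z2 + \<i> / 3 * (n / m - Pb) * rX" "kb_X = w1 - kb * w2 - \<i> / 3 * (nb / mb - P) * rX" "z_X = m * z2" "zb_X = mb * w2" "k_Y = z1y - k * z2y + \<i> / 3 * (n / m - Pb) * rY" "kb_Y = w1y - kb * w2y - \<i> / 3 * (nb / mb - P) * rY" "z_Y = m * z2y" "zb_Y = mb * w2y"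
    and eh: "Ezet = (z1 * L1m + z2 * L2m + w1 * n + w2 * (- (m * M1kb) - kb * n) + l * rX * Dm) * z2y - (z1y * L1m + z2y * L2m + w1y * n + w2y * (- (m * M1kb) - kb * n) + l * rY * Dm) * z2" "Tm = l * Dm"
  shows "Ezet =
      (\<i>/3 * nb * n / (mb * m)
       - \<i>/3 * L1m * n / (m)^2
       - \<i>/3 * n / m * P
       + \<i>/3 * L1m / m * Pb
       + Tm / m) * (rX * z_Y - rY * z_X)
    + L1m / m * (k_X * z_Y - k_Y * z_X)
    - n / m * (z_X * kb_Y - z_Y * kb_X)
    + M1kb / mb * (z_X * zb_Y - z_Y * zb_X)"
  unfolding fh eh  using nz by (simp add: field_simps power2_eq_square power3_eq_cube)


context CR begin

lemma DRHO: "x \<in> U \<Longrightarrow> extd (rho0 F) x X Y = DRF (fz1 X) (fz2 X) (cnj (fz1 X)) (cnj (fz2 X)) (rho0 F x X)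
   (fz1 Y) (fz2 Y) (cnj (fz1 Y)) (cnj (fz2 Y)) (rho0 F x Y) (qk x) (qkb x) (PP F x) (cnj (PP F x)) (QL1 qk x) (QLb1 qkb x)"
proof -
  assume x: "x \<in> U"
  have i1: "qk x * QL1 ql x + QL2 ql x = ql x * (qk x * dv qa1 x + dv qa2 x - QL1 qk x)"
    using I1[OF x] by (simp add: Kop_def)
  have i1b: "qkb x * QLb1 ql x + QLb2 ql x = ql x * (qkb x * dv qb1 x + dv qb2 x - QLb1 qkb x)"
    using I1b[OF x] by (simp add: Kbop_def)
  show ?thesis
    unfolding extd_def FL[OF SS_rhoY x] op_rho[OF isop_L1 x] op_rho[OF isop_L2 x] op_rho[OF isop_Lb1 x]
      op_rho[OF isop_Lb2 x] op_rho[OF isop_D x]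
    by (rule alg_drho[OF ellnz[OF x] INT[OF x] INTb[OF x] H11 H21[OF x] H12[OF x] H22[OF x] i1 i1b PPf[OF x] PPbf[OF x]])
qed

lemma Dk_form: "x \<in> U \<Longrightarrow> dirD qk X x = fz1 X * QL1 qk x + fz2 X * QL2 qk x + cnj (fz1 X) * QLb1 qk x
   - cnj (fz2 X) * qkb x * QLb1 qk x + ql x * rho0 F x X * dv qk x"
  using FL[OF SS_kk, of x X] I3f[of x] by (simp add: algebra_simps)

lemma L1B0: "x \<in> U \<Longrightarrow> QL1 (B0 F) x = EL1B0 (QLb1 qk x) (QLb1 (QLb1 qk) x) (QL1 (QLb1 (QLb1 qk)) x) (QL1 (QLb1 qk) x) (QL1 (\<lambda>q. cnj (PP F q)) x)"
  unfolding B0fun EL1B0_def using mnz by (simp add: opdiff opdivide SSs SS_divide SS_PPb)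

lemma M1B0: "x \<in> U \<Longrightarrow> QLb1 (B0 F) x = EM1B0 (QLb1 qk x) (QLb1 (QLb1 qk) x) (QLb1 (QLb1 (QLb1 qk)) x) (QLb1 (\<lambda>q. cnj (PP F q)) x)"
  unfolding B0fun EM1B0_def using mnz by (simp add: opdiff opdivide SSs SS_divide SS_PPb)

lemma L2B0: "x \<in> U \<Longrightarrow> QL2 (B0 F) x = EL2B0 (QLb1 qk x) (QLb1 (QLb1 qk) x) (QK (QLb1 (QLb1 qk)) x) (QK (QLb1 qk) x)
    (Top F qk x) (PP F x) (QLb1 (QL1 qk) x) (qk x) (QL1 (QLb1 (QLb1 qk)) x) (QL1 (QLb1 qk) x) (QL1 (\<lambda>q. cnj (PP F q)) x)"
proof -
  assume x: "x \<in> U"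
  have a: "QK (B0 F) x = qk x * QL1 (B0 F) x + QL2 (B0 F) x" by (simp add: Kop_def)
  have b: "QK (B0 F) x = (QLb1 qk x * QK (QLb1 (QLb1 qk)) x - QLb1 (QLb1 qk) x * QK (QLb1 qk) x) / (QLb1 qk x * QLb1 qk x)
      - QK (\<lambda>q. cnj (PP F q)) x"
    unfolding B0fun using x mnz by (simp add: opdiff opdivide SSs SS_divide SS_PPb)
  have "QL2 (B0 F) x = QK (B0 F) x - qk x * QL1 (B0 F) x" using a by simp
  also have "\<dots> = EL2B0 (QLb1 qk x) (QLb1 (QLb1 qk) x) (QK (QLb1 (QLb1 qk)) x) (QK (QLb1 qk) x)
    (Top F qk x) (PP F x) (QLb1 (QL1 qk) x) (qk x) (QL1 (QLb1 (QLb1 qk)) x) (QL1 (QLb1 qk) x) (QL1 (\<lambda>q. cnj (PP F q)) x)"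
    unfolding b I6[OF x] L1B0[OF x] EL2B0_def by (simp add: algebra_simps)
  finally show ?thesis .
qed

lemma M2B0: "x \<in> U \<Longrightarrow> QLb2 (B0 F) x = EM2B0 (QLb1 qk x) (QLb1 (QLb1 qk) x) (cnj (PP F x)) (QLb1 qkb x) (qkb x)
   (QLb1 (QLb1 (QLb1 qk)) x) (QLb1 (\<lambda>q. cnj (PP F q)) x)"
proof -
  assume x: "x \<in> U"
  have a: "QKb (B0 F) x = qkb x * QLb1 (B0 F) x + QLb2 (B0 F) x" by (simp add: Kbop_def)
  have "QLb2 (B0 F) x = QKb (B0 F) x - qkb x * QLb1 (B0 F) x" using a by simp
  also have "\<dots> = EM2B0 (QLb1 qk x) (QLb1 (QLb1 qk) x) (cnj (PP F x)) (QLb1 qkb x) (qkb x)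
   (QLb1 (QLb1 (QLb1 qk)) x) (QLb1 (\<lambda>q. cnj (PP F q)) x)"
    unfolding I4[OF x] M1B0[OF x] EM2B0_def B0_def by (simp add: algebra_simps)
  finally show ?thesis .
qed

lemma DB0_form: "x \<in> U \<Longrightarrow> dirD (B0 F) X x =
   fz1 X * EL1B0 (QLb1 qk x) (QLb1 (QLb1 qk) x) (QL1 (QLb1 (QLb1 qk)) x) (QL1 (QLb1 qk) x) (QL1 (\<lambda>q. cnj (PP F q)) x)
 + fz2 X * EL2B0 (QLb1 qk x) (QLb1 (QLb1 qk) x) (QK (QLb1 (QLb1 qk)) x) (QK (QLb1 qk) x)
    (Top F qk x) (PP F x) (QLb1 (QL1 qk) x) (qk x) (QL1 (QLb1 (QLb1 qk)) x) (QL1 (QLb1 qk) x) (QL1 (\<lambda>q. cnj (PP F q)) x)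
 + cnj (fz1 X) * EM1B0 (QLb1 qk x) (QLb1 (QLb1 qk) x) (QLb1 (QLb1 (QLb1 qk)) x) (QLb1 (\<lambda>q. cnj (PP F q)) x)
 + cnj (fz2 X) * EM2B0 (QLb1 qk x) (QLb1 (QLb1 qk) x) (cnj (PP F x)) (QLb1 qkb x) (qkb x)
   (QLb1 (QLb1 (QLb1 qk)) x) (QLb1 (\<lambda>q. cnj (PP F q)) x)
 + ql x * rho0 F x X * dv (B0 F) x"
  using FL[OF SS_B0, of x X] L1B0[of x] L2B0[of x] M1B0[of x] M2B0[of x] by simp

lemma Dm_form: "x \<in> U \<Longrightarrow> dirD (QLb1 qk) X x = fz1 X * QL1 (QLb1 qk) x + fz2 X * QL2 (QLb1 qk) x
   + cnj (fz1 X) * QLb1 (QLb1 qk) x + cnj (fz2 X) * (- (QLb1 qk x * QLb1 qkb x) - qkb x * QLb1 (QLb1 qk) x)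
   + ql x * rho0 F x X * dv (QLb1 qk) x"
proof -
  assume x: "x \<in> U"
  have a: "QKb (QLb1 qk) x = qkb x * QLb1 (QLb1 qk) x + QLb2 (QLb1 qk) x" by (simp add: Kbop_def)
  have b: "QLb2 (QLb1 qk) x = - (QLb1 qk x * QLb1 qkb x) - qkb x * QLb1 (QLb1 qk) x"
    using a I2[OF x] by (simp add: algebra_simps)
  show ?thesis using FL[OF SSop(3)[OF SS_kk] x, of X] b by simp
qed

end

theorem proposition7p2:
  fixes F :: "pt \<Rightarrow> real" and U :: "pt set" and p X Y :: pt
  assumes "open U"
    and "real_analytic_on U F"
    and "\<forall>x\<in>U. ell F x \<noteq> 0"
    and "\<forall>x\<in>U. rank (levi F x) = 1"
    and "\<forall>x\<in>U. Lb1op F (kk F) x \<noteq> 0"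
    and "p \<in> U"
  defines "k \<equiv> kk F" and "kb \<equiv> \<lambda>q. cnj (kk F q)"
    and "L1 \<equiv> L1op F" and "Lb1 \<equiv> Lb1op F" and "K \<equiv> Kop F" and "T \<equiv> Top F"
    and "P \<equiv> PP F" and "Pb \<equiv> \<lambda>q. cnj (PP F q)"
    and "\<rho> \<equiv> rho0 F" and "\<kappa> \<equiv> kappa0 F" and "\<zeta> \<equiv> zeta0 F"
    and "\<kappa>b \<equiv> conjform (kappa0 F)" and "\<zeta>b \<equiv> conjform (zeta0 F)"
  shows
   "extd \<rho> p X Y =
      (1/3 * L1 (L1 kb) p / L1 kb p + 2/3 * P p) * wedge \<rho> \<kappa> p X Y
    - L1 k p / Lb1 k p * wedge \<rho> \<zeta> p X Y
    + (1/3 * Lb1 (Lb1 k) p / Lb1 k p + 2/3 * Pb p) * wedge \<rho> \<kappa>b p X Y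
    - Lb1 kb p / L1 kb p * wedge \<rho> \<zeta>b p X Y
    + \<i> * wedge \<kappa> \<kappa>b p X Y
   \<and>
   extd \<kappa> p X Y =
      (- \<i>/3 * L1 (Lb1 (Lb1 k)) p / Lb1 k p
       + \<i>/9 * L1 (L1 kb) p * Lb1 (Lb1 k) p / (L1 kb p * Lb1 k p)
       + \<i>/3 * L1 (Lb1 k) p * Lb1 (Lb1 k) p / (Lb1 k p)^2
       - \<i>/9 * L1 (L1 kb) p / L1 kb p * Pb p
       + 2*\<i>/9 * Lb1 (Lb1 k) p / Lb1 k p * P p
       + \<i>/3 * L1 Pb p
       - 2*\<i>/9 * P p * Pb p) * wedge \<rho> \<kappa> p X Y
    + (- \<i>/3 * K (Lb1 (Lb1 k)) p / (Lb1 k p)^2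
       + \<i>/3 * K (Lb1 k) p * Lb1 (Lb1 k) p / (Lb1 k p)^3
       - \<i>/3 * L1 (L1 kb) p / L1 kb p
       - \<i>/3 * Lb1 (L1 k) p / Lb1 k p
       - 2/3 * T k p / Lb1 k p) * wedge \<rho> \<zeta> p X Y
    + (- \<i>/3 * Lb1 (Lb1 (Lb1 k)) p / Lb1 k p
       + 4*\<i>/9 * (Lb1 (Lb1 k) p)^2 / (Lb1 k p)^2
       + \<i>/9 * Lb1 (Lb1 k) p / Lb1 k p * Pb p
       + \<i>/3 * Lb1 Pb p
       - 2*\<i>/9 * Pb p * Pb p) * wedge \<rho> \<kappa>b p X Y
    + 0 * wedge \<rho> \<zeta>b p X Y
    - L1 k p / Lb1 k p * wedge \<kappa> \<zeta> p X Y
    + (- 1/3 * Lb1 (Lb1 k) p / Lb1 k p + 1/3 * Pb p) * wedge \<kappa> \<kappa>b p X Y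
    + wedge \<zeta> \<kappa>b p X Y
   \<and>
   extd \<zeta> p X Y =
      (\<i>/3 * L1 (L1 kb) p * Lb1 (Lb1 k) p / (L1 kb p * Lb1 k p)
       - \<i>/3 * L1 (Lb1 k) p * Lb1 (Lb1 k) p / (Lb1 k p)^2
       - \<i>/3 * Lb1 (Lb1 k) p / Lb1 k p * P p
       + \<i>/3 * L1 (Lb1 k) p / Lb1 k p * Pb p
       + T (Lb1 k) p / Lb1 k p) * wedge \<rho> \<zeta> p X Y
    + L1 (Lb1 k) p / Lb1 k p * wedge \<kappa> \<zeta> p X Y
    - Lb1 (Lb1 k) p / Lb1 k p * wedge \<zeta> \<kappa>b p X Y
    + Lb1 kb p / L1 kb p * wedge \<zeta> \<zeta>b p X Y"
proof -
  interpret CR F U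
  proof
    show "open U" by (rule assms(1))
    show "smooth_on U F" using assms(2) by (simp add: real_analytic_on_def)
  qed (use assms(3-5) in auto)
  have p: "p \<in> U" by (rule assms(6))
  have nz: "ell F p \<noteq> 0" "Lb1op F (kk F) p \<noteq> 0" "L1op F (\<lambda>q. cnj (kk F q)) p \<noteq> 0"
    using ellnz[OF p] mnz[OF p] cnj_m[OF p] by (auto simp flip: cnj_m[OF p])
  have fk: "kappa0 F p Z = fz1 Z - kk F p * fz2 Z + \<i> / 3 * (Lb1op F (Lb1op F (kk F)) p / Lb1op F (kk F) p - cnj (PP F p)) * rho0 F p Z" for Z
    by (simp add: kappa0_def B0_def)
  have fkb: "conjform (kappa0 F) p Z = cnj (fz1 Z) - cnj (kk F p) * cnj (fz2 Z)
     - \<i> / 3 * (L1op F (L1op F (\<lambda>q. cnj (kk F q))) p / L1op F (\<lambda>q. cnj (kk F q)) p - PP F p) * rho0 F p Z" for Z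
    by (simp add: conjform_def kappa0_def B0_def cnj_n[OF p] cnj_m[OF p] rho_real[OF p])
  have fz: "zeta0 F p Z = Lb1op F (kk F) p * fz2 Z" for Z by (simp add: zeta0_def)
  have fzb: "conjform (zeta0 F) p Z = L1op F (\<lambda>q. cnj (kk F q)) p * cnj (fz2 Z)" for Z
    by (simp add: conjform_def zeta0_def cnj_m[OF p])
  note fh = fk[of X] fkb[of X] fz[of X] fzb[of X] fk[of Y] fkb[of Y] fz[of Y] fzb[of Y]
  have Er: "extd (rho0 F) p X Y = DRF (fz1 X) (fz2 X) (cnj (fz1 X)) (cnj (fz2 X)) (rho0 F p X)
   (fz1 Y) (fz2 Y) (cnj (fz1 Y)) (cnj (fz2 Y)) (rho0 F p Y) (kk F p) (cnj (kk F p)) (PP F p) (cnj (PP F p))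
   (L1op F (kk F) p) (Lb1op F (\<lambda>q. cnj (kk F q)) p)"
    by (rule DRHO[OF p])
  have Ek: "extd (kappa0 F) p X Y = - (dirD (kk F) X p * fz2 Y - dirD (kk F) Y p * fz2 X)
   + \<i> / 3 * (dirD (B0 F) X p * rho0 F p Y - dirD (B0 F) Y p * rho0 F p X) + \<i> / 3 * B0 F p * extd (rho0 F) p X Y"
    by (rule DKAP[OF p])
  have Ek': "extd (kappa0 F) p X Y = - ((fz1 X * L1op F (kk F) p + fz2 X * L2op F (kk F) p + cnj (fz1 X) * Lb1op F (kk F) p
   - cnj (fz2 X) * cnj (kk F p) * Lb1op F (kk F) p + ell F p * rho0 F p X * dv (kk F) p) * fz2 Y
   - (fz1 Y * L1op F (kk F) p + fz2 Y * L2op F (kk F) p + cnj (fz1 Y) * Lb1op F (kk F) p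
   - cnj (fz2 Y) * cnj (kk F p) * Lb1op F (kk F) p + ell F p * rho0 F p Y * dv (kk F) p) * fz2 X)
   + \<i> / 3 * ((fz1 X * EL1B0 (Lb1op F (kk F) p) (Lb1op F (Lb1op F (kk F)) p) (L1op F (Lb1op F (Lb1op F (kk F))) p) (L1op F (Lb1op F (kk F)) p) (L1op F (\<lambda>q. cnj (PP F q)) p)
 + fz2 X * EL2B0 (Lb1op F (kk F) p) (Lb1op F (Lb1op F (kk F)) p) (Kop F (Lb1op F (Lb1op F (kk F))) p) (Kop F (Lb1op F (kk F)) p)
    (Top F (kk F) p) (PP F p) (Lb1op F (L1op F (kk F)) p) (kk F p) (L1op F (Lb1op F (Lb1op F (kk F))) p) (L1op F (Lb1op F (kk F)) p) (L1op F (\<lambda>q. cnj (PP F q)) p)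
 + cnj (fz1 X) * EM1B0 (Lb1op F (kk F) p) (Lb1op F (Lb1op F (kk F)) p) (Lb1op F (Lb1op F (Lb1op F (kk F))) p) (Lb1op F (\<lambda>q. cnj (PP F q)) p)
 + cnj (fz2 X) * EM2B0 (Lb1op F (kk F) p) (Lb1op F (Lb1op F (kk F)) p) (cnj (PP F p)) (Lb1op F (\<lambda>q. cnj (kk F q)) p) (cnj (kk F p))
   (Lb1op F (Lb1op F (Lb1op F (kk F))) p) (Lb1op F (\<lambda>q. cnj (PP F q)) p)
 + ell F p * rho0 F p X * dv (B0 F) p) * rho0 F p Y
 - (fz1 Y * EL1B0 (Lb1op F (kk F) p) (Lb1op F (Lb1op F (kk F)) p) (L1op F (Lb1op F (Lb1op F (kk F))) p) (L1op F (Lb1op F (kk F)) p) (L1op F (\<lambda>q. cnj (PP F q)) p)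
 + fz2 Y * EL2B0 (Lb1op F (kk F) p) (Lb1op F (Lb1op F (kk F)) p) (Kop F (Lb1op F (Lb1op F (kk F))) p) (Kop F (Lb1op F (kk F)) p)
    (Top F (kk F) p) (PP F p) (Lb1op F (L1op F (kk F)) p) (kk F p) (L1op F (Lb1op F (Lb1op F (kk F))) p) (L1op F (Lb1op F (kk F)) p) (L1op F (\<lambda>q. cnj (PP F q)) p)
 + cnj (fz1 Y) * EM1B0 (Lb1op F (kk F) p) (Lb1op F (Lb1op F (kk F)) p) (Lb1op F (Lb1op F (Lb1op F (kk F))) p) (Lb1op F (\<lambda>q. cnj (PP F q)) p)
 + cnj (fz2 Y) * EM2B0 (Lb1op F (kk F) p) (Lb1op F (Lb1op F (kk F)) p) (cnj (PP F p)) (Lb1op F (\<lambda>q. cnj (kk F q)) p) (cnj (kk F p))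
   (Lb1op F (Lb1op F (Lb1op F (kk F))) p) (Lb1op F (\<lambda>q. cnj (PP F q)) p)
 + ell F p * rho0 F p Y * dv (B0 F) p) * rho0 F p X)
   + \<i> / 3 * (Lb1op F (Lb1op F (kk F)) p / Lb1op F (kk F) p - cnj (PP F p)) * DRF (fz1 X) (fz2 X) (cnj (fz1 X)) (cnj (fz2 X)) (rho0 F p X)
   (fz1 Y) (fz2 Y) (cnj (fz1 Y)) (cnj (fz2 Y)) (rho0 F p Y) (kk F p) (cnj (kk F p)) (PP F p) (cnj (PP F p))
   (L1op F (kk F) p) (Lb1op F (\<lambda>q. cnj (kk F q)) p)"
    unfolding Ek Er Dk_form[OF p] DB0_form[OF p] B0_def ..
  have Ez: "extd (zeta0 F) p X Y = (fz1 X * L1op F (Lb1op F (kk F)) p + fz2 X * L2op F (Lb1op F (kk F)) p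
   + cnj (fz1 X) * Lb1op F (Lb1op F (kk F)) p + cnj (fz2 X) * (- (Lb1op F (kk F) p * Lb1op F (\<lambda>q. cnj (kk F q)) p) - cnj (kk F p) * Lb1op F (Lb1op F (kk F)) p)
   + ell F p * rho0 F p X * dv (Lb1op F (kk F)) p) * fz2 Y
   - (fz1 Y * L1op F (Lb1op F (kk F)) p + fz2 Y * L2op F (Lb1op F (kk F)) p
   + cnj (fz1 Y) * Lb1op F (Lb1op F (kk F)) p + cnj (fz2 Y) * (- (Lb1op F (kk F) p * Lb1op F (\<lambda>q. cnj (kk F q)) p) - cnj (kk F p) * Lb1op F (Lb1op F (kk F)) p)
   + ell F p * rho0 F p Y * dv (Lb1op F (kk F)) p) * fz2 X"
    unfolding DZET[OF p] Dm_form[OF p] ..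
  have Tk: "Top F (kk F) p = ell F p * dv (kk F) p" by (simp add: Top_def)
  have Tm: "Top F (Lb1op F (kk F)) p = ell F p * dv (Lb1op F (kk F)) p" by (simp add: Top_def)
  show ?thesis
    unfolding assms(7-19) wedge_def
    by (intro conjI) (rule alg_rho[OF nz fh Er], rule alg_kap[OF nz fh Ek' Tk], rule alg_zet[OF nz fh Ez Tm])
qed

end
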